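(* Let $p,q$ be odd primes with $q-p=2$, let $K=\mathbb{Q}(\sqrt{-7})$, and assume $p$ and $q$ are both inert in $K$. Let $E'=E'_-: y^2=x^3+2(p+q)x^2+4x$ and $\pi_2=-\frac{1+\sqrt{-7}}{2}$, $\overline{\pi_2}=\frac{-1+\sqrt{-7}}{2}$. Then: (1) if $d\in K(S,2)$ satisfies $\pi_2\mid d$ or $\overline{\pi_2}\mid d$, then $d\notin S^{(\widehat\varphi)}(E'/K)$; (2) $p,q\in S^{(\widehat\varphi)}(E'/K)$; (3) $-1\in S^{(\widehat\varphi)}(E'/K)$ iff $p\equiv 3,31,45\pmod{56}$.
   Context: Let $E=E_-: y^2=x(x-p)(x-q)$ and $\widehat\varphi:E'\to E$, $(x,y)\mapsto(y^2/(4x^2), y(4-x^2)/(8x^2))$, the dual of $\varphi:E\to E'$, $(x,y)\mapsto(y^2/x^2,y(pq-x^2)/x^2)$. Let $S=\{\infty\}\cup\{$primes of $K$ dividing $2pq\}$ and $K(S,2)=\{d\in K^*/K^{*2}:\ \mathrm{ord}_v(d)$ even for all $v\notin S\}=\langle -1,\pi_2,\overline{\pi_2},p,q\rangle$. The $\widehat\varphi$-Selmer group is identified with $S^{(\widehat\varphi)}(E'/K)=\{d\in K(S,2): C'_d(K_v)\neq\emptyset$ for all $v\in S\}$, where $C'_d: dw^2=d^2-(p+q)dz^2+pqz^4$. "$\pi\mid d$" means $\mathrm{ord}_\pi(d)$ is odd. *)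

theory Defs
  imports Complex_Main "HOL-Computational_Algebra.Primes"
begin

definition sqrtm7 :: complex where "sqrtm7 = \<i> * complex_of_real (sqrt 7)"

definition Kfield :: "complex set" where
  "Kfield = {of_rat a + of_rat b * sqrtm7 | a b. True}"

definition OK :: "complex set" where
  "OK = {of_int a + of_int b * ((1 + sqrtm7) / 2) | a b. True}"

definition dvdO :: "complex \<Rightarrow> complex \<Rightarrow> bool" where
  "dvdO x y \<longleftrightarrow> (\<exists>k\<in>OK. y = x * k)"

text \<open>Prime elements of O_K (generators of the nonzero prime ideals).\<close>
definition primeO :: "complex \<Rightarrow> bool" where
  "primeO \<pi> \<longleftrightarrow> \<pi> \<in> OK \<and> \<pi> \<noteq> 0 \<and> inverse \<pi> \<notin> OK \<and>
     (\<forall>a\<in>OK. \<forall>b\<in>OK. dvdO \<pi> (a * b) \<longrightarrow> dvdO \<pi> a \<or> dvdO \<pi> b)"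

definition ordK :: "complex \<Rightarrow> complex \<Rightarrow> int" where
  "ordK \<pi> x = (THE n::int. \<exists>u\<in>OK. \<exists>v\<in>OK. \<not> dvdO \<pi> u \<and> \<not> dvdO \<pi> v \<and>
                            x = \<pi> powi n * u / v)"

text \<open>x is pi-adically small: ord_pi(x) >= m (with ord_pi 0 = infinity).\<close>
definition vclose :: "complex \<Rightarrow> complex \<Rightarrow> int \<Rightarrow> bool" where
  "vclose \<pi> x m \<longleftrightarrow> x = 0 \<or> m \<le> ordK \<pi> x"

definition vcauchy :: "complex \<Rightarrow> (nat \<Rightarrow> complex) \<Rightarrow> bool" where
  "vcauchy \<pi> f \<longleftrightarrow> (\<forall>m::int. \<exists>N. \<forall>i\<ge>N. \<forall>j\<ge>N. vclose \<pi> (f i - f j) m)"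

definition vnull :: "complex \<Rightarrow> (nat \<Rightarrow> complex) \<Rightarrow> bool" where
  "vnull \<pi> f \<longleftrightarrow> (\<forall>m::int. \<exists>N. \<forall>i\<ge>N. vclose \<pi> (f i) m)"

definition Cres :: "nat \<Rightarrow> nat \<Rightarrow> complex \<Rightarrow> complex \<Rightarrow> complex \<Rightarrow> complex" where
  "Cres p q d z w = d * w\<^sup>2 - (d\<^sup>2 - (of_nat p + of_nat q) * d * z\<^sup>2 + of_nat p * of_nat q * z ^ 4)"

text \<open>C'_d(K_pi) is nonempty: a point of the completion K_pi is represented by pi-adic
  Cauchy sequences of elements of K, and the equation holds in K_pi iff the residual
  tends to 0 pi-adically.\<close>
definition loc_solv :: "nat \<Rightarrow> nat \<Rightarrow> complex \<Rightarrow> complex \<Rightarrow> bool" where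
  "loc_solv p q \<pi> d \<longleftrightarrow> (\<exists>z w. (\<forall>n. z n \<in> Kfield \<and> w n \<in> Kfield) \<and>
       vcauchy \<pi> z \<and> vcauchy \<pi> w \<and> vnull \<pi> (\<lambda>n. Cres p q d (z n) (w n)))"

text \<open>Archimedean place: K_infinity = C.\<close>
definition arch_solv :: "nat \<Rightarrow> nat \<Rightarrow> complex \<Rightarrow> bool" where
  "arch_solv p q d \<longleftrightarrow> (\<exists>z w :: complex. Cres p q d z w = 0)"

text \<open>K(S,2), as a set of representatives in K^*: ord_v(d) even for every prime v not in S,
  i.e. not dividing 2pq.\<close>
definition KS2 :: "nat \<Rightarrow> nat \<Rightarrow> complex set" where
  "KS2 p q = {d \<in> Kfield. d \<noteq> 0 \<and>
      (\<forall>\<pi>. primeO \<pi> \<and> \<not> dvdO \<pi> (2 * of_nat p * of_nat q) \<longrightarrow> even (ordK \<pi> d))}"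

text \<open>The phi-hat Selmer group S^(phi-hat)(E'/K), via its identification with
  {d in K(S,2) : C'_d(K_v) nonempty for all v in S}.\<close>
definition selmer :: "nat \<Rightarrow> nat \<Rightarrow> complex \<Rightarrow> bool" where
  "selmer p q d \<longleftrightarrow> d \<in> KS2 p q \<and> arch_solv p q d \<and>
      (\<forall>\<pi>. primeO \<pi> \<and> dvdO \<pi> (2 * of_nat p * of_nat q) \<longrightarrow> loc_solv p q \<pi> d)"

definition pi2 :: complex where "pi2 = - (1 + sqrtm7) / 2"
definition pi2bar :: complex where "pi2bar = (-1 + sqrtm7) / 2"

end

theory Submission
  imports Defs "HOL-Number_Theory.Number_Theory"
begin


definition om :: complex where "om = (1 + sqrtm7) / 2"

lemma sqrtm7_sq: "sqrtm7 ^ 2 = -7"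
  by (simp add: sqrtm7_def power_mult_distrib flip: of_real_power)

lemma om_sq: "om ^ 2 = om - 2"
proof -
  have "om ^ 2 = (1 + 2*sqrtm7 + sqrtm7^2)/4" by (simp add: om_def power2_eq_square field_simps)
  also have "\<dots> = om - 2" by (simp add: sqrtm7_sq om_def field_simps)
  finally show ?thesis .
qed

lemma om_mult_om: "om * om = om - 2" using om_sq by (simp add: power2_eq_square)

lemma om_mult_om': "om * (om * z) = om * z - 2 * z"
  by (metis mult.assoc om_mult_om left_diff_distrib)

lemma Re_om: "Re om = 1/2" by (simp add: om_def sqrtm7_def)
lemma Im_om: "Im om = sqrt 7 / 2" by (simp add: om_def sqrtm7_def)
lemma cnj_om: "cnj om = 1 - om"
  by (simp add: complex_eq_iff Re_om Im_om)

lemma OK_iff: "x \<in> OK \<longleftrightarrow> (\<exists>a b. x = of_int a + of_int b * om)"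
  by (auto simp: OK_def om_def)

lemma OK_coord_eq:
  assumes "of_int a + of_int b * om = (of_int c + of_int d * om :: complex)"
  shows "a = c \<and> b = d"
proof -
  from arg_cong[OF assms, of Im] have "b = d" by (simp add: Im_om)
  with assms show ?thesis by simp
qed

lemma OK_I: "of_int a + of_int b * om \<in> OK" by (auto simp: OK_iff)

lemma OK_add: "x \<in> OK \<Longrightarrow> y \<in> OK \<Longrightarrow> x + y \<in> OK"
proof -
  assume "x \<in> OK" "y \<in> OK"
  then obtain a b c d where "x = of_int a + of_int b * om" "y = of_int c + of_int d * om"
    by (auto simp: OK_iff)
  then have "x + y = of_int (a+c) + of_int (b+d) * om" by (simp add: algebra_simps)
  then show ?thesis by (metis OK_I)
qed

lemma OK_uminus: "x \<in> OK \<Longrightarrow> - x \<in> OK"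
proof -
  assume "x \<in> OK"
  then obtain a b where "x = of_int a + of_int b * om" by (auto simp: OK_iff)
  then have "- x = of_int (-a) + of_int (-b) * om" by (simp add: algebra_simps)
  then show ?thesis by (metis OK_I)
qed

lemma OK_diff: "x \<in> OK \<Longrightarrow> y \<in> OK \<Longrightarrow> x - y \<in> OK"
  using OK_add[of x "-y"] OK_uminus[of y] by simp

lemma OK_mult: "x \<in> OK \<Longrightarrow> y \<in> OK \<Longrightarrow> x * y \<in> OK"
proof -
  assume "x \<in> OK" "y \<in> OK"
  then obtain a b c d where "x = of_int a + of_int b * om" "y = of_int c + of_int d * om"
    by (auto simp: OK_iff)
  then have "x * y = of_int (a*c - 2*b*d) + of_int (a*d + b*c + b*d) * om"
    by (simp add: om_mult_om' algebra_simps)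
  then show ?thesis by (metis OK_I)
qed

lemma OK_of_int [simp]: "of_int n \<in> OK"
  using OK_I[of n 0] by simp
lemma OK_of_nat [simp]: "of_nat n \<in> OK"
  using OK_of_int[of "int n"] by simp
lemma OK_0 [simp]: "0 \<in> OK" using OK_of_int[of 0] by simp
lemma OK_1 [simp]: "1 \<in> OK" using OK_of_int[of 1] by simp
lemma OK_numeral [simp]: "numeral n \<in> OK" using OK_of_int[of "numeral n"] by simp
lemma OK_om [simp]: "om \<in> OK" using OK_I[of 0 1] by simp
lemma OK_power: "x \<in> OK \<Longrightarrow> x ^ n \<in> OK"
  by (induction n) (auto intro: OK_mult)
lemma OK_cnj: "x \<in> OK \<Longrightarrow> cnj x \<in> OK"
proof -
  assume "x \<in> OK"
  then obtain a b where "x = of_int a + of_int b * om" by (auto simp: OK_iff)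
  then have "cnj x = of_int (a+b) + of_int (-b) * om" by (simp add: cnj_om algebra_simps)
  then show ?thesis by (metis OK_I)
qed

lemma OK_sum: "(\<And>i. i \<in> S \<Longrightarrow> f i \<in> OK) \<Longrightarrow> sum f S \<in> OK"
  by (induction S rule: infinite_finite_induct) (auto intro: OK_add)

lemma OK_norm_int:
  assumes "x \<in> OK" shows "\<exists>n::nat. (cmod x)^2 = real n \<and> x * cnj x = of_nat n"
proof -
  obtain a b where x: "x = of_int a + of_int b * om" using assms by (auto simp: OK_iff)
  have "x * cnj x = of_int (a*a + a*b + 2*b*b)"
    by (simp add: x cnj_om algebra_simps om_mult_om')
  moreover have "a*a + a*b + 2*b*b \<ge> 0"
  proof -
    have "0 \<le> (2*a+b)^2 + 7*b^2" by simp
    also have "\<dots> = 4*(a*a + a*b + 2*b*b)" by (simp add: power2_eq_square algebra_simps)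
    finally show ?thesis by simp
  qed
  moreover have "x * cnj x = complex_of_real ((cmod x)^2)" by (rule complex_norm_square[symmetric])
  ultimately show ?thesis
    by (intro exI[of _ "nat (a*a + a*b + 2*b*b)"])
      (metis of_int_of_nat_eq int_nat_eq of_real_eq_iff of_real_of_nat_eq complex_of_real_def)
qed


lemma dvdO_0 [simp]: "dvdO x 0" unfolding dvdO_def using OK_0 by (metis mult_zero_right)
lemma dvdO_refl: "dvdO x x" unfolding dvdO_def by (rule bexI[of _ 1]) auto
lemma dvdO_mult_right: "dvdO a b \<Longrightarrow> c \<in> OK \<Longrightarrow> dvdO a (b * c)"
  unfolding dvdO_def by (metis OK_mult mult.assoc)
lemma dvdO_mult_left: "dvdO a b \<Longrightarrow> c \<in> OK \<Longrightarrow> dvdO a (c * b)"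
  using dvdO_mult_right[of a b c] by (simp add: mult.commute)
lemma dvdO_trans: "dvdO a b \<Longrightarrow> dvdO b c \<Longrightarrow> dvdO a c"
  by (auto simp: dvdO_def) (metis OK_mult mult.assoc)
lemma dvdO_add: "dvdO a b \<Longrightarrow> dvdO a c \<Longrightarrow> dvdO a (b + c)"
  by (auto simp: dvdO_def) (metis OK_add distrib_left)
lemma dvdO_uminus: "dvdO a b \<Longrightarrow> dvdO a (- b)"
  by (auto simp: dvdO_def) (metis OK_uminus mult_minus_right)
lemma dvdO_diff: "dvdO a b \<Longrightarrow> dvdO a c \<Longrightarrow> dvdO a (b - c)"
  using dvdO_add[of a b "-c"] dvdO_uminus[of a c] by simp
lemma dvdO_self_mult: "c \<in> OK \<Longrightarrow> dvdO a (a * c)" by (auto simp: dvdO_def)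
lemma dvdO_OK: "a \<in> OK \<Longrightarrow> dvdO a b \<Longrightarrow> b \<in> OK"
  by (auto simp: dvdO_def intro: OK_mult)

lemma primeO_OK: "primeO p \<Longrightarrow> p \<in> OK" by (simp add: primeO_def)
lemma primeO_nz: "primeO p \<Longrightarrow> p \<noteq> 0" by (simp add: primeO_def)
lemma primeO_dvd_mult: "primeO p \<Longrightarrow> a \<in> OK \<Longrightarrow> b \<in> OK \<Longrightarrow> dvdO p (a * b) \<Longrightarrow> dvdO p a \<or> dvdO p b"
  by (simp add: primeO_def)
lemma primeO_not_dvd_1: "primeO p \<Longrightarrow> \<not> dvdO p 1"
proof
  assume "primeO p" "dvdO p 1"
  then obtain k where "k \<in> OK" "1 = p * k" by (auto simp: dvdO_def)
  then have "inverse p = k" by (metis inverse_unique)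
  then show False using \<open>primeO p\<close> \<open>k \<in> OK\<close> by (simp add: primeO_def)
qed
lemma primeO_dvd_power: "primeO p \<Longrightarrow> a \<in> OK \<Longrightarrow> dvdO p (a ^ n) \<Longrightarrow> dvdO p a"
proof (induction n)
  case 0 then show ?case using primeO_not_dvd_1 by simp
next
  case (Suc n)
  then show ?case using primeO_dvd_mult[of p a "a^n"] OK_power by auto
qed

lemma primeO_norm: assumes "primeO p" shows "(cmod p)^2 \<ge> 2"
proof -
  obtain n :: nat where n: "(cmod p)^2 = real n" "p * cnj p = of_nat n"
    using OK_norm_int primeO_OK assms by blast
  have "n \<noteq> 0" using n primeO_nz[OF assms] by (metis complex_cnj_zero_iff mult_eq_0_iff of_nat_0)
  moreover have "n \<noteq> 1"
  proof
    assume "n = 1"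
    then have "inverse p = cnj p" using n(2) primeO_nz[OF assms]
      by (metis inverse_unique of_nat_1)
    then show False using assms OK_cnj unfolding primeO_def by auto
  qed
  ultimately have "n \<ge> 2" by linarith
  then show ?thesis using n by simp
qed

lemma factor_OK:
  assumes "primeO p" "x \<in> OK" "x \<noteq> 0"
  shows "\<exists>k u. u \<in> OK \<and> \<not> dvdO p u \<and> x = p ^ k * u"
proof -
  have "\<forall>x. x \<in> OK \<longrightarrow> x \<noteq> 0 \<longrightarrow> (cmod x)^2 = real n \<longrightarrow> (\<exists>k u. u \<in> OK \<and> \<not> dvdO p u \<and> x = p ^ k * u)" for n
  proof (induction n rule: less_induct)
    case (less n)
    show ?case
    proof (intro allI impI)
      fix x assume x: "x \<in> OK" "x \<noteq> 0" "(cmod x)^2 = real n"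
      show "\<exists>k u. u \<in> OK \<and> \<not> dvdO p u \<and> x = p ^ k * u"
      proof (cases "dvdO p x")
        case False then show ?thesis using x by (intro exI[of _ 0] exI[of _ x]) auto
      next
        case True
        then obtain y where y: "y \<in> OK" "x = p * y" by (auto simp: dvdO_def)
        have "y \<noteq> 0" using y x by auto
        obtain m :: nat where m: "(cmod y)^2 = real m" using OK_norm_int y by blast
        have "(cmod x)^2 = (cmod p)^2 * (cmod y)^2" by (simp add: y norm_mult power_mult_distrib)
        moreover have "(cmod y)^2 > 0" using \<open>y \<noteq> 0\<close> by simp
        moreover have "2 * (cmod y)^2 \<le> (cmod p)^2 * (cmod y)^2"
          by (rule mult_right_mono) (use primeO_norm[OF assms(1)] in auto)
        ultimately have "(cmod y)^2 < (cmod x)^2" by linarith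
        then have "m < n" using m x by simp
        then obtain k u where "u \<in> OK" "\<not> dvdO p u" "y = p ^ k * u"
          using less.IH y \<open>y \<noteq> 0\<close> m by blast
        then show ?thesis using y by (intro exI[of _ "Suc k"] exI[of _ u]) auto
      qed
    qed
  qed
  moreover obtain n :: nat where "(cmod x)^2 = real n" using OK_norm_int assms(2) by blast
  ultimately show ?thesis using assms by blast
qed

definition vrep :: "complex \<Rightarrow> complex \<Rightarrow> int \<Rightarrow> bool" where
  "vrep p x n \<longleftrightarrow> (\<exists>u\<in>OK. \<exists>v\<in>OK. \<not> dvdO p u \<and> \<not> dvdO p v \<and> x = p powi n * u / v)"

lemma ordK_vrep: "ordK p x = (THE n. vrep p x n)"
  by (simp add: ordK_def vrep_def)

lemma not_dvd_nz: "\<not> dvdO p u \<Longrightarrow> u \<noteq> 0" by auto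

lemma vrep_unique_lt:
  assumes "primeO p" "vrep p x n" "vrep p x m" "n < m"
  shows False
proof -
  obtain u v where uv: "u \<in> OK" "v \<in> OK" "\<not> dvdO p u" "\<not> dvdO p v" "x = p powi n * u / v"
    using assms(2) by (auto simp: vrep_def)
  obtain u' v' where uv': "u' \<in> OK" "v' \<in> OK" "\<not> dvdO p u'" "\<not> dvdO p v'" "x = p powi m * u' / v'"
    using assms(3) by (auto simp: vrep_def)
  define k where "k = nat (m - n)"
  have pz: "p \<noteq> 0" using primeO_nz assms(1) by simp
  have mk: "m - n = int k" using assms(4) by (simp add: k_def)
  have "p powi m = p powi n * p powi (m - n)"
    using power_int_add[of p n "m - n"] pz by simp
  then have "p powi m = p powi n * p ^ k" unfolding mk by simp
  then have "p powi n * u / v = p powi n * (p ^ k * u') / v'" using uv uv' by (metis mult.assoc)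
  then have "p powi n * (u / v) = p powi n * (p ^ k * u' / v')" by (simp only: times_divide_eq_right)
  moreover have "p powi n \<noteq> 0" using pz by simp
  ultimately have "u / v = p ^ k * u' / v'" by (simp only: mult_cancel_left) simp
  then have e1: "u * v' = p ^ k * u' * v"
    using not_dvd_nz[OF uv(4)] not_dvd_nz[OF uv'(4)] by (simp add: field_simps)
  have "k > 0" using assms(4) by (simp add: k_def)
  then have "p ^ k = p * p ^ (k - 1)" by (cases k) auto
  then have eq: "u * v' = p * (p ^ (k - 1) * u' * v)" using e1 by (simp add: mult.assoc)
  have "dvdO p (u * v')" unfolding eq
    by (rule dvdO_self_mult) (intro OK_mult OK_power primeO_OK[OF assms(1)] uv uv')
  then show False using primeO_dvd_mult[OF assms(1) uv(1) uv'(2)] uv uv' by blast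
qed

lemma vrep_unique: "primeO p \<Longrightarrow> vrep p x n \<Longrightarrow> vrep p x m \<Longrightarrow> n = m"
  using vrep_unique_lt[of p x n m] vrep_unique_lt[of p x m n] by fastforce

lemma ordK_eqI: "primeO p \<Longrightarrow> vrep p x n \<Longrightarrow> ordK p x = n"
  unfolding ordK_vrep by (rule the_equality) (auto intro: vrep_unique)

lemma vrep_frac:
  assumes "primeO p" "y \<in> OK" "z \<in> OK" "y \<noteq> 0" "z \<noteq> 0"
  shows "\<exists>n. vrep p (y / z) n"
proof -
  obtain k u where ku: "u \<in> OK" "\<not> dvdO p u" "y = p ^ k * u" using factor_OK assms by blast
  obtain j v where jv: "v \<in> OK" "\<not> dvdO p v" "z = p ^ j * v" using factor_OK assms by blast
  have pz: "p \<noteq> 0" using primeO_nz assms(1) by simp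
  have "p powi (int k - int j) = p ^ k / p ^ j" using power_int_diff[of p "int k" "int j"] pz by simp
  then have "y / z = p powi (int k - int j) * u / v" using ku jv pz by simp
  then show ?thesis using ku jv unfolding vrep_def by blast
qed

lemma sqrtm7_om: "sqrtm7 = 2 * om - 1" by (simp add: om_def field_simps)

lemma Kfield_iff: "x \<in> Kfield \<longleftrightarrow> (\<exists>y\<in>OK. \<exists>D::int. D \<noteq> 0 \<and> x = y / of_int D)"
proof
  assume "x \<in> Kfield"
  then obtain a b where x: "x = of_rat a + of_rat b * sqrtm7" by (auto simp: Kfield_def)
  obtain A D where aD: "quotient_of a = (A, D)" by (cases "quotient_of a")
  obtain B E where bE: "quotient_of b = (B, E)" by (cases "quotient_of b")
  have D: "D > 0" "a = of_int A / of_int D" using aD quotient_of_denom_pos quotient_of_div by blast+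
  have E: "E > 0" "b = of_int B / of_int E" using bE quotient_of_denom_pos quotient_of_div by blast+
  have ra: "of_rat a = (of_int A / of_int D :: complex)" using D by (simp add: of_rat_divide)
  have rb: "of_rat b = (of_int B / of_int E :: complex)" using E by (simp add: of_rat_divide)
  have "x = (of_int (A*E - B*D) + of_int (2*B*D) * om) / of_int (D*E)"
    using D E by (simp add: x ra rb sqrtm7_om field_simps)
  moreover have "D * E \<noteq> 0" using D E by simp
  ultimately show "\<exists>y\<in>OK. \<exists>D::int. D \<noteq> 0 \<and> x = y / of_int D"
    by (intro bexI[OF _ OK_I[of "A*E - B*D" "2*B*D"]] exI[of _ "D*E"]) auto
next
  assume "\<exists>y\<in>OK. \<exists>D::int. D \<noteq> 0 \<and> x = y / of_int D"
  then obtain a b D where x: "x = (of_int a + of_int b * om) / of_int D" "D \<noteq> 0"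
    by (auto simp: OK_iff)
  have "x = of_rat ((of_int a + of_int b / 2) / of_int D) + of_rat (of_int b / 2 / of_int D) * sqrtm7"
    using x by (simp add: om_def of_rat_divide of_rat_add of_rat_mult field_simps)
  then show "x \<in> Kfield" unfolding Kfield_def by blast
qed

lemma OK_Kfield: "x \<in> OK \<Longrightarrow> x \<in> Kfield"
  unfolding Kfield_iff by (intro bexI[of _ x] exI[of _ 1]) auto

lemma Kfield_add: "x \<in> Kfield \<Longrightarrow> y \<in> Kfield \<Longrightarrow> x + y \<in> Kfield"
proof -
  assume "x \<in> Kfield" "y \<in> Kfield"
  then obtain a D b E where "a \<in> OK" "D \<noteq> 0" "x = a / of_int D" "b \<in> OK" "E \<noteq> 0" "y = b / of_int E"
    by (auto simp: Kfield_iff)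
  then have "x + y = (a * of_int E + b * of_int D) / of_int (D * E)" "D * E \<noteq> 0"
    by (simp_all add: field_simps)
  moreover have "a * of_int E + b * of_int D \<in> OK" using \<open>a \<in> OK\<close> \<open>b \<in> OK\<close> by (intro OK_add OK_mult) auto
  ultimately show ?thesis unfolding Kfield_iff by blast
qed

lemma Kfield_mult: "x \<in> Kfield \<Longrightarrow> y \<in> Kfield \<Longrightarrow> x * y \<in> Kfield"
proof -
  assume "x \<in> Kfield" "y \<in> Kfield"
  then obtain a D b E where "a \<in> OK" "D \<noteq> 0" "x = a / of_int D" "b \<in> OK" "E \<noteq> 0" "y = b / of_int E"
    by (auto simp: Kfield_iff)
  then have "x * y = (a * b) / of_int (D * E)" "D * E \<noteq> 0" by (simp_all add: field_simps)
  moreover have "a * b \<in> OK" using \<open>a \<in> OK\<close> \<open>b \<in> OK\<close> by (intro OK_mult)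
  ultimately show ?thesis unfolding Kfield_iff by blast
qed

lemma Kfield_uminus: "x \<in> Kfield \<Longrightarrow> - x \<in> Kfield"
  using Kfield_mult[of "-1" x] OK_Kfield[of "-1"] OK_uminus[of 1] by simp

lemma Kfield_diff: "x \<in> Kfield \<Longrightarrow> y \<in> Kfield \<Longrightarrow> x - y \<in> Kfield"
  using Kfield_add[of x "-y"] Kfield_uminus by simp

lemma Kfield_inverse: "x \<in> Kfield \<Longrightarrow> inverse x \<in> Kfield"
proof -
  assume "x \<in> Kfield"
  then obtain a D where a: "a \<in> OK" "D \<noteq> 0" "x = a / of_int D" by (auto simp: Kfield_iff)
  show ?thesis
  proof (cases "a = 0")
    case True then show ?thesis using a OK_Kfield[of 0] by simp
  next
    case False
    obtain n :: nat where n: "a * cnj a = of_nat n" using OK_norm_int a(1) by blast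
    have "n \<noteq> 0" using n False by (metis complex_cnj_zero_iff mult_eq_0_iff of_nat_0)
    have "inverse x = of_int D / a" using a by simp
    also have "\<dots> = (of_int D * cnj a) / (a * cnj a)" using False by simp
    also have "\<dots> = (of_int D * cnj a) / of_int (int n)" using n by simp
    finally have "inverse x = (of_int D * cnj a) / of_int (int n)" .
    moreover have "of_int D * cnj a \<in> OK" using a by (intro OK_mult OK_cnj) auto
    ultimately show ?thesis unfolding Kfield_iff using \<open>n \<noteq> 0\<close>
      by (intro bexI[of _ "of_int D * cnj a"] exI[of _ "int n"]) auto
  qed
qed

lemma Kfield_divide: "x \<in> Kfield \<Longrightarrow> y \<in> Kfield \<Longrightarrow> x / y \<in> Kfield"
  using Kfield_mult[of x "inverse y"] Kfield_inverse by (simp add: divide_inverse)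

lemma Kfield_of_int [simp]: "of_int n \<in> Kfield" by (simp add: OK_Kfield)
lemma Kfield_of_nat [simp]: "of_nat n \<in> Kfield" by (simp add: OK_Kfield)
lemma Kfield_numeral [simp]: "numeral n \<in> Kfield" by (simp add: OK_Kfield)
lemma Kfield_0 [simp]: "0 \<in> Kfield" and Kfield_1 [simp]: "1 \<in> Kfield" by (simp_all add: OK_Kfield)
lemma Kfield_power: "x \<in> Kfield \<Longrightarrow> x ^ n \<in> Kfield"
  by (induction n) (auto intro: Kfield_mult)

lemma vrep_exists:
  assumes "primeO p" "x \<in> Kfield" "x \<noteq> 0"
  shows "vrep p x (ordK p x)"
proof -
  obtain a D where a: "a \<in> OK" "D \<noteq> 0" "x = a / of_int D" using assms by (auto simp: Kfield_iff)
  then obtain n where "vrep p x n" using vrep_frac[OF assms(1) a(1), of "of_int D"] assms(3) by auto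
  then show ?thesis using ordK_eqI[OF assms(1)] by simp
qed


lemma vrep_mult:
  assumes "primeO p" "vrep p x n" "vrep p y m" shows "vrep p (x * y) (n + m)"
proof -
  obtain u v where uv: "u \<in> OK" "v \<in> OK" "\<not> dvdO p u" "\<not> dvdO p v" "x = p powi n * u / v"
    using assms(2) by (auto simp: vrep_def)
  obtain u' v' where uv': "u' \<in> OK" "v' \<in> OK" "\<not> dvdO p u'" "\<not> dvdO p v'" "y = p powi m * u' / v'"
    using assms(3) by (auto simp: vrep_def)
  have pz: "p \<noteq> 0" using primeO_nz assms(1) by simp
  have "x * y = p powi (n + m) * (u * u') / (v * v')"
    using pz by (simp add: uv uv' power_int_add)
  moreover have "\<not> dvdO p (u * u')" "\<not> dvdO p (v * v')"
    using primeO_dvd_mult[OF assms(1)] uv uv' by blast+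
  ultimately show ?thesis unfolding vrep_def using uv uv' OK_mult by blast
qed

lemma vrep_inverse:
  assumes "primeO p" "vrep p x n" shows "vrep p (inverse x) (- n)"
proof -
  obtain u v where uv: "u \<in> OK" "v \<in> OK" "\<not> dvdO p u" "\<not> dvdO p v" "x = p powi n * u / v"
    using assms(2) by (auto simp: vrep_def)
  have "inverse x = p powi (-n) * v / u" by (simp add: uv power_int_minus field_simps)
  then show ?thesis unfolding vrep_def using uv by blast
qed

lemma vrep_uminus:
  assumes "vrep p x n" shows "vrep p (- x) n"
proof -
  obtain u v where uv: "u \<in> OK" "v \<in> OK" "\<not> dvdO p u" "\<not> dvdO p v" "x = p powi n * u / v"
    using assms(1) by (auto simp: vrep_def)
  have "- x = p powi n * (- u) / v" by (simp add: uv)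
  moreover have "\<not> dvdO p (- u)" using dvdO_uminus[of p "-u"] uv by auto
  ultimately show ?thesis unfolding vrep_def using uv OK_uminus by blast
qed

lemma vrep_unit: "primeO p \<Longrightarrow> u \<in> OK \<Longrightarrow> \<not> dvdO p u \<Longrightarrow> vrep p u 0"
  unfolding vrep_def using primeO_not_dvd_1 by (intro bexI[of _ u] bexI[of _ 1]) auto

lemma vrep_pow_unit: "primeO p \<Longrightarrow> u \<in> OK \<Longrightarrow> \<not> dvdO p u \<Longrightarrow> vrep p (p ^ k * u) (int k)"
  unfolding vrep_def using primeO_not_dvd_1 by (intro bexI[of _ u] bexI[of _ 1]) auto

lemma vrep_powi: "primeO p \<Longrightarrow> vrep p (p powi j) j"
  unfolding vrep_def using primeO_not_dvd_1 by (intro bexI[of _ 1] bexI[of _ 1]) auto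

lemma Kfield_powi: "x \<in> Kfield \<Longrightarrow> x powi j \<in> Kfield"
  by (auto simp: power_int_def intro: Kfield_power Kfield_inverse)

lemma primeO_Kfield: "primeO p \<Longrightarrow> p \<in> Kfield" by (simp add: OK_Kfield primeO_OK)

context
  fixes p assumes P: "primeO p"
begin

lemma pnz: "p \<noteq> 0" using primeO_nz P by simp

lemma ordK_mult: "x \<in> Kfield \<Longrightarrow> y \<in> Kfield \<Longrightarrow> x \<noteq> 0 \<Longrightarrow> y \<noteq> 0 \<Longrightarrow>
    ordK p (x * y) = ordK p x + ordK p y"
  by (rule ordK_eqI[OF P], rule vrep_mult[OF P]) (auto intro: vrep_exists[OF P])

lemma ordK_inverse: "x \<in> Kfield \<Longrightarrow> x \<noteq> 0 \<Longrightarrow> ordK p (inverse x) = - ordK p x"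
  by (rule ordK_eqI[OF P], rule vrep_inverse[OF P]) (auto intro: vrep_exists[OF P])

lemma ordK_divide: "x \<in> Kfield \<Longrightarrow> y \<in> Kfield \<Longrightarrow> x \<noteq> 0 \<Longrightarrow> y \<noteq> 0 \<Longrightarrow>
    ordK p (x / y) = ordK p x - ordK p y"
  using ordK_mult[of x "inverse y"] ordK_inverse[of y] Kfield_inverse[of y]
  by (simp add: divide_inverse)

lemma ordK_uminus: "x \<in> Kfield \<Longrightarrow> x \<noteq> 0 \<Longrightarrow> ordK p (- x) = ordK p x"
  by (rule ordK_eqI[OF P], rule vrep_uminus) (auto intro: vrep_exists[OF P])

lemma ordK_unit: "u \<in> OK \<Longrightarrow> \<not> dvdO p u \<Longrightarrow> ordK p u = 0"
  by (rule ordK_eqI[OF P vrep_unit[OF P]])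

lemma ordK_1: "ordK p 1 = 0" using ordK_unit[OF OK_1 primeO_not_dvd_1[OF P]] .

lemma ordK_power: "x \<in> Kfield \<Longrightarrow> x \<noteq> 0 \<Longrightarrow> ordK p (x ^ n) = int n * ordK p x"
  by (induction n) (auto simp: ordK_mult Kfield_power algebra_simps ordK_1)

lemma ordK_powi: "ordK p (p powi j) = j"
  by (rule ordK_eqI[OF P vrep_powi[OF P]])

lemma ordK_OK: "x \<in> OK \<Longrightarrow> x \<noteq> 0 \<Longrightarrow> ordK p x \<ge> 0"
  using factor_OK[OF P] ordK_eqI[OF P vrep_pow_unit[OF P]] by fastforce

lemma vclose_0 [simp]: "vclose p 0 m" by (simp add: vclose_def)

lemma vclose_mono: "vclose p x m \<Longrightarrow> k \<le> m \<Longrightarrow> vclose p x k"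
  by (auto simp: vclose_def)

lemma vclose_OK: "x \<in> OK \<Longrightarrow> vclose p x 0"
  using ordK_OK by (auto simp: vclose_def)

lemma vclose_mult: "x \<in> Kfield \<Longrightarrow> y \<in> Kfield \<Longrightarrow> vclose p x m \<Longrightarrow> vclose p y k \<Longrightarrow> vclose p (x * y) (m + k)"
  by (cases "x = 0"; cases "y = 0") (auto simp: vclose_def ordK_mult)

lemma vclose_uminus: "x \<in> Kfield \<Longrightarrow> vclose p x m \<Longrightarrow> vclose p (- x) m"
  by (cases "x = 0") (auto simp: vclose_def ordK_uminus)

lemma vint_iff: "x \<in> Kfield \<Longrightarrow> vclose p x 0 \<longleftrightarrow> (\<exists>a\<in>OK. \<exists>b\<in>OK. \<not> dvdO p b \<and> x = a / b)"
proof
  assume x: "x \<in> Kfield" "vclose p x 0"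
  show "\<exists>a\<in>OK. \<exists>b\<in>OK. \<not> dvdO p b \<and> x = a / b"
  proof (cases "x = 0")
    case True then show ?thesis using primeO_not_dvd_1[OF P] by (intro bexI[of _ 0] bexI[of _ 1]) auto
  next
    case False
    then obtain u v where uv: "u \<in> OK" "v \<in> OK" "\<not> dvdO p u" "\<not> dvdO p v" "x = p powi (ordK p x) * u / v"
      using vrep_exists[OF P x(1)] by (auto simp: vrep_def)
    have "ordK p x \<ge> 0" using x False by (simp add: vclose_def)
    then have "p powi (ordK p x) = p ^ nat (ordK p x)"
      by (metis power_int_of_nat nat_0_le)
    then have "x = (p ^ nat (ordK p x) * u) / v" using uv by simp
    moreover have "p ^ nat (ordK p x) * u \<in> OK" using uv primeO_OK[OF P] by (intro OK_mult OK_power)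
    ultimately show ?thesis using uv by blast
  qed
next
  assume x: "x \<in> Kfield" and "\<exists>a\<in>OK. \<exists>b\<in>OK. \<not> dvdO p b \<and> x = a / b"
  then obtain a b where ab: "a \<in> OK" "b \<in> OK" "\<not> dvdO p b" "x = a / b" by blast
  show "vclose p x 0"
  proof (cases "a = 0")
    case True then show ?thesis using ab by simp
  next
    case False
    then obtain k u where ku: "u \<in> OK" "\<not> dvdO p u" "a = p ^ k * u" using factor_OK[OF P ab(1)] by blast
    have "vrep p x (int k)" unfolding vrep_def using ku ab by (intro bexI[of _ u] bexI[of _ b]) auto
    then show ?thesis using ordK_eqI[OF P] by (simp add: vclose_def)
  qed
qed

lemma vclose_add0: "x \<in> Kfield \<Longrightarrow> y \<in> Kfield \<Longrightarrow> vclose p x 0 \<Longrightarrow> vclose p y 0 \<Longrightarrow> vclose p (x + y) 0"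
proof -
  assume xy: "x \<in> Kfield" "y \<in> Kfield" "vclose p x 0" "vclose p y 0"
  then obtain a b c d where "a \<in> OK" "b \<in> OK" "\<not> dvdO p b" "x = a / b"
      "c \<in> OK" "d \<in> OK" "\<not> dvdO p d" "y = c / d" using vint_iff by meson
  moreover have "b \<noteq> 0" "d \<noteq> 0" using calculation by auto
  ultimately have "x + y = (a * d + c * b) / (b * d)" "a * d + c * b \<in> OK" "b * d \<in> OK" "\<not> dvdO p (b * d)"
    using primeO_dvd_mult[OF P] by (auto simp: field_simps intro: OK_add OK_mult)
  then show ?thesis using vint_iff[of "x+y"] Kfield_add xy by blast
qed

lemma vclose_shift: "x \<in> Kfield \<Longrightarrow> vclose p x m \<longleftrightarrow> vclose p (x * p powi (- m)) 0"
proof (cases "x = 0")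
  case False
  assume x: "x \<in> Kfield"
  have "ordK p (x * p powi (- m)) = ordK p x - m"
    using ordK_mult[of x "p powi (-m)"] ordK_powi[of "-m"] x False pnz Kfield_powi primeO_Kfield[OF P]
    by simp
  then show ?thesis using False pnz by (simp add: vclose_def)
qed simp

lemma vclose_add: "x \<in> Kfield \<Longrightarrow> y \<in> Kfield \<Longrightarrow> vclose p x m \<Longrightarrow> vclose p y m \<Longrightarrow> vclose p (x + y) m"
proof -
  assume xy: "x \<in> Kfield" "y \<in> Kfield" "vclose p x m" "vclose p y m"
  have k: "p powi (-m) \<in> Kfield" using Kfield_powi primeO_Kfield[OF P] by blast
  have "vclose p (x * p powi (-m) + y * p powi (-m)) 0"
    using xy vclose_shift k by (intro vclose_add0) (auto intro: Kfield_mult)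
  then show ?thesis using vclose_shift[of "x+y"] xy Kfield_add by (simp add: distrib_right)
qed

lemma vclose_diff: "x \<in> Kfield \<Longrightarrow> y \<in> Kfield \<Longrightarrow> vclose p x m \<Longrightarrow> vclose p y m \<Longrightarrow> vclose p (x - y) m"
  using vclose_add[of x "-y" m] vclose_uminus[of y m] Kfield_uminus[of y] by simp

lemma vclose_pow_dvd: "y \<in> OK \<Longrightarrow> vclose p (p ^ k * y) (int k)"
proof -
  assume y: "y \<in> OK"
  have "vclose p (p ^ k) (int k)"
    using ordK_powi[of "int k"] by (simp add: vclose_def)
  moreover have "vclose p y 0" using vclose_OK y by simp
  ultimately show ?thesis using vclose_mult[of "p ^ k" y "int k" 0] Kfield_power primeO_Kfield[OF P] OK_Kfield y
    by simp
qed

lemma vclose_ordK: "x \<in> Kfield \<Longrightarrow> vclose p x (ordK p x)"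
  by (simp add: vclose_def)

lemma ordK_add_strict:
  assumes "x \<in> Kfield" "y \<in> Kfield" "x \<noteq> 0" "ordK p x < m" "vclose p y m"
  shows "x + y \<noteq> 0 \<and> ordK p (x + y) = ordK p x"
proof -
  have "x + y \<noteq> 0"
  proof
    assume "x + y = 0"
    then have "y = - x" by (simp add: add.commute eq_neg_iff_add_eq_0)
    then show False using assms ordK_uminus[of x] by (auto simp: vclose_def)
  qed
  have a: "vclose p (x + y) (ordK p x)"
    using vclose_add[of x y "ordK p x"] assms vclose_mono[of y m "ordK p x"] by (simp add: vclose_def)
  have "vclose p x (min (ordK p (x + y)) m)"
    using vclose_diff[of "x+y" y "min (ordK p (x + y)) m"] assms Kfield_add[of x y]
      vclose_mono[of y m] vclose_ordK[of "x+y"] vclose_mono[of "x+y" "ordK p (x+y)"] by simp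
  then have "ordK p x \<ge> min (ordK p (x + y)) m" using assms by (simp add: vclose_def)
  then show ?thesis using a assms \<open>x + y \<noteq> 0\<close> by (simp add: vclose_def)
qed

end


lemma pi2_om: "pi2 = - om" by (simp add: pi2_def om_def field_simps)
lemma pi2bar_om: "pi2bar = om - 1" by (simp add: pi2bar_def om_def field_simps)

lemma dvd_pi2_coord: "dvdO pi2 (of_int a + of_int b * om) \<longleftrightarrow> even a"
proof
  assume "dvdO pi2 (of_int a + of_int b * om)"
  then obtain k where k: "k \<in> OK" "of_int a + of_int b * om = pi2 * k" by (auto simp: dvdO_def)
  then obtain e f where ef: "k = of_int e + of_int f * om" by (auto simp: OK_iff)
  have "pi2 * k = of_int (2*f) + of_int (-e-f) * om" by (simp add: ef pi2_om algebra_simps om_mult_om')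
  then have "a = 2 * f" using OK_coord_eq k(2) by metis
  then show "even a" by simp
next
  assume "even a"
  then obtain c where c: "a = 2 * c" by blast
  have "of_int a + of_int b * om = pi2 * (of_int (-b-c) + of_int c * om)"
    by (simp add: c pi2_om algebra_simps om_mult_om')
  then show "dvdO pi2 (of_int a + of_int b * om)" unfolding dvdO_def using OK_I by blast
qed

lemma dvd_pi2_int: "dvdO pi2 (of_int a) \<longleftrightarrow> even a"
  using dvd_pi2_coord[of a 0] by simp

lemma pi2_OK: "pi2 \<in> OK" using OK_I[of 0 "-1"] by (simp add: pi2_om)
lemma pi2bar_OK: "pi2bar \<in> OK" using OK_I[of "-1" 1] by (simp add: pi2bar_om)

lemma primeO_pi2: "primeO pi2"
proof -
  have nz: "pi2 \<noteq> 0" using Im_om by (auto simp: pi2_om)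
  have "\<not> dvdO pi2 1" using dvd_pi2_int[of 1] by simp
  then have inv: "inverse pi2 \<notin> OK" using nz unfolding dvdO_def
    by (metis right_inverse)
  have "dvdO pi2 a \<or> dvdO pi2 b" if ab0: "a \<in> OK" "b \<in> OK" "dvdO pi2 (a * b)" for a b
  proof -
    obtain a1 a2 where a: "a = of_int a1 + of_int a2 * om" using ab0(1) OK_iff by blast
    obtain c1 c2 where b: "b = of_int c1 + of_int c2 * om" using ab0(2) OK_iff by blast
    note ab = a b
    have "a * b = of_int (a1*c1 - 2*a2*c2) + of_int (a1*c2 + a2*c1 + a2*c2) * om"
      by (simp add: ab algebra_simps om_mult_om')
    then have "even (a1*c1 - 2*a2*c2)" using ab0(3) dvd_pi2_coord by metis
    then have "even a1 \<or> even c1" by auto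
    then show ?thesis using dvd_pi2_coord ab by metis
  qed
  then show ?thesis unfolding primeO_def using pi2_OK nz inv by blast
qed

lemma two_pi2: "2 = pi2 * pi2bar"
  by (simp add: pi2_om pi2bar_om algebra_simps om_mult_om)

lemma not_dvd_pi2_pi2bar: "\<not> dvdO pi2 pi2bar"
  using dvd_pi2_coord[of "-1" 1] by (simp add: pi2bar_om)

lemma pi2_dvd_2pq: "dvdO pi2 (2 * of_nat p * of_nat q)"
  unfolding two_pi2 dvdO_def using pi2bar_OK
  by (intro bexI[of _ "pi2bar * of_nat p * of_nat q"]) (auto simp: mult.assoc intro!: OK_mult)

lemma ordK_pi2_odd: "odd a \<Longrightarrow> ordK pi2 (of_int a) = 0"
  using ordK_unit[OF primeO_pi2, of "of_int a"] dvd_pi2_int by simp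

lemma ordK_pi2_odd_nat: "odd r \<Longrightarrow> ordK pi2 (of_nat r) = 0"
  using ordK_pi2_odd[of "int r"] by simp

lemma ordK_pi2_pow2_odd: "odd m \<Longrightarrow> ordK pi2 (of_int (2 ^ k * m)) = int k"
proof -
  assume m: "odd m"
  have eq: "of_int (2 ^ k * m) = pi2 ^ k * (pi2bar ^ k * of_int m)"
    by (simp add: two_pi2 power_mult_distrib)
  have nd: "\<not> dvdO pi2 (pi2bar ^ k * of_int m)"
    using primeO_dvd_mult[OF primeO_pi2] primeO_dvd_power[OF primeO_pi2] pi2bar_OK OK_power
      not_dvd_pi2_pi2bar dvd_pi2_int m by (metis OK_of_int)
  have u: "pi2bar ^ k * of_int m \<in> OK" by (intro OK_mult OK_power pi2bar_OK OK_of_int)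
  show ?thesis unfolding eq by (rule ordK_eqI[OF primeO_pi2 vrep_pow_unit[OF primeO_pi2 u nd]])
qed

lemma vclose_pi2_int: "2 ^ k dvd n \<Longrightarrow> vclose pi2 (of_int n) (int k)"
proof -
  assume "2 ^ k dvd n"
  then obtain m where m: "n = 2 ^ k * m" by blast
  have "of_int n = pi2 ^ k * (pi2bar ^ k * of_int m)"
    by (simp add: m two_pi2 power_mult_distrib)
  then show ?thesis using vclose_pow_dvd[OF primeO_pi2] pi2bar_OK by (simp add: OK_mult OK_power)
qed

lemma ordK_pi2_2: "ordK pi2 2 = 1" using ordK_pi2_pow2_odd[of 1 1] by simp
lemma ordK_pi2_4: "ordK pi2 4 = 2" using ordK_pi2_pow2_odd[of 1 2] by simp

lemma ordK_add_cases:
  assumes P: "primeO p" and "a \<in> Kfield" "b \<in> Kfield" "a \<noteq> 0" "b \<noteq> 0" "ordK p a \<noteq> ordK p b"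
  shows "a + b \<noteq> 0 \<and> ordK p (a + b) = min (ordK p a) (ordK p b)"
proof (cases "ordK p a < ordK p b")
  case True
  then show ?thesis using ordK_add_strict[OF P, of a b "ordK p b"] vclose_ordK[OF P] assms by simp
next
  case False
  then have "ordK p b < ordK p a" using assms by simp
  then show ?thesis using ordK_add_strict[OF P, of b a "ordK p a"] vclose_ordK[OF P] assms
    by (simp add: add.commute)
qed

lemma Cres_eq: "Cres p q d z w = d * w\<^sup>2 - (d - of_nat p * z\<^sup>2) * (d - of_nat q * z\<^sup>2)"
  unfolding Cres_def by (simp add: algebra_simps power2_eq_square power4_eq_xxxx)

lemma core_A_factor:
  assumes d: "d \<in> Kfield" "d \<noteq> 0" "odd (ordK pi2 d)" and z: "z \<in> Kfield" and r: "odd r"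
  shows "d - of_nat r * z\<^sup>2 \<noteq> 0 \<and>
    ordK pi2 (d - of_nat r * z\<^sup>2) = (if z = 0 then ordK pi2 d else min (ordK pi2 d) (2 * ordK pi2 z))"
proof (cases "z = 0")
  case True then show ?thesis using d by simp
next
  case False
  have r0: "r \<noteq> 0" using odd_pos[OF r] by simp
  have b: "- (of_nat r * z\<^sup>2) \<in> Kfield" "- (of_nat r * z\<^sup>2) \<noteq> 0"
    using z False r0 by (auto intro!: Kfield_uminus Kfield_mult Kfield_power)
  have "ordK pi2 (- (of_nat r * z\<^sup>2)) = ordK pi2 (of_nat r * z\<^sup>2)"
    using ordK_uminus[OF primeO_pi2] b by (metis minus_minus neg_equal_0_iff_equal Kfield_uminus)
  also have "\<dots> = ordK pi2 (of_nat r) + ordK pi2 (z\<^sup>2)"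
    using ordK_mult[OF primeO_pi2 Kfield_of_nat Kfield_power[OF z]] r0 False by simp
  also have "\<dots> = 2 * ordK pi2 z"
    using ordK_power[OF primeO_pi2 z False, of 2] ordK_pi2_odd_nat[OF r] by simp
  finally have "ordK pi2 (- (of_nat r * z\<^sup>2)) = 2 * ordK pi2 z" .
  moreover have "ordK pi2 d \<noteq> 2 * ordK pi2 z" using d by auto
  ultimately show ?thesis using ordK_add_cases[OF primeO_pi2 d(1) b(1) d(2) b(2)] False by simp
qed

lemma core_A:
  assumes d: "d \<in> Kfield" "d \<noteq> 0" "odd (ordK pi2 d)" and zw: "z \<in> Kfield" "w \<in> Kfield"
    and pq: "odd p" "odd q"
    and R: "vclose pi2 (Cres p q d z w) (2 * ordK pi2 d + 1)"
  shows False
proof -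
  define mu where "mu = (if z = 0 then ordK pi2 d else min (ordK pi2 d) (2 * ordK pi2 z))"
  have A1: "d - of_nat p * z\<^sup>2 \<noteq> 0" "ordK pi2 (d - of_nat p * z\<^sup>2) = mu"
    using core_A_factor[OF d zw(1) pq(1)] by (auto simp: mu_def)
  have A2: "d - of_nat q * z\<^sup>2 \<noteq> 0" "ordK pi2 (d - of_nat q * z\<^sup>2) = mu"
    using core_A_factor[OF d zw(1) pq(2)] by (auto simp: mu_def)
  define F where "F = (d - of_nat p * z\<^sup>2) * (d - of_nat q * z\<^sup>2)"
  have FK: "F \<in> Kfield" using d zw by (auto simp: F_def intro!: Kfield_mult Kfield_diff Kfield_power)
  have K1: "d - of_nat p * z\<^sup>2 \<in> Kfield" "d - of_nat q * z\<^sup>2 \<in> Kfield"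
    using d zw by (auto intro!: Kfield_mult Kfield_diff Kfield_power)
  have F: "F \<noteq> 0" "ordK pi2 F = 2 * mu"
    using A1 A2 ordK_mult[OF primeO_pi2 K1 A1(1) A2(1)] unfolding F_def by auto
  have "mu \<le> ordK pi2 d" by (simp add: mu_def)
  have RK: "Cres p q d z w \<in> Kfield" using d zw unfolding Cres_def
    by (auto intro!: Kfield_diff Kfield_mult Kfield_power Kfield_add)
  have eq: "d * w\<^sup>2 = F + Cres p q d z w" by (simp add: Cres_eq F_def)
  have "F + Cres p q d z w \<noteq> 0 \<and> ordK pi2 (F + Cres p q d z w) = ordK pi2 F"
    using ordK_add_strict[OF primeO_pi2 FK RK F(1), of "2 * ordK pi2 d + 1"] F R \<open>mu \<le> ordK pi2 d\<close>
    by simp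
  then have "d * w\<^sup>2 \<noteq> 0" "ordK pi2 (d * w\<^sup>2) = 2 * mu" using eq F by auto
  moreover have "w \<noteq> 0" using calculation by auto
  moreover have "ordK pi2 (d * w\<^sup>2) = ordK pi2 d + 2 * ordK pi2 w"
    using ordK_mult[OF primeO_pi2 d(1) Kfield_power[OF zw(2)] d(2)] ordK_power[OF primeO_pi2 zw(2) \<open>w \<noteq> 0\<close>, of 2]
      \<open>w \<noteq> 0\<close> by simp
  ultimately have "ordK pi2 d + 2 * ordK pi2 w = 2 * mu" by simp
  then show False using d(3) by presburger
qed


lemmas Kf = Kfield_add Kfield_mult Kfield_diff Kfield_uminus Kfield_power Kfield_inverse Kfield_divide
  Kfield_of_nat Kfield_of_int Kfield_numeral Kfield_0 Kfield_1

lemma pi2_cube: "pi2 ^ 3 = om + 2"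
proof -
  have "pi2 ^ 3 = - (om * (om * om))" by (simp add: pi2_om power3_eq_cube)
  also have "\<dots> = om + 2" by (simp add: om_mult_om' om_mult_om algebra_simps)
  finally show ?thesis .
qed

lemma cube_dvd: "X = 2 * Y + 8 * t \<Longrightarrow>
   of_int X + of_int Y * om = pi2 ^ 3 * (of_int (Y + 3 * t) + of_int (- t) * om)"
  by (simp add: pi2_cube algebra_simps om_mult_om')

lemma odd_sq8: "odd (a::int) \<Longrightarrow> \<exists>k. a^2 = 8 * k + 1"
proof -
  assume "odd a"
  then obtain b where b: "a = 2 * b + 1" by (metis oddE)
  have "even (b * (b + 1))" by simp
  then obtain c where "b * (b + 1) = 2 * c" by blast
  then have "a^2 = 8 * c + 1" by (simp add: b power2_eq_square algebra_simps)
  then show ?thesis by blast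
qed

lemma even_b_ab: "odd (a::int) \<Longrightarrow> even (b * (a + b))"
  by (cases "even b") auto

lemma sq_unit_pi2:
  assumes w: "w \<in> Kfield" "w \<noteq> 0" "ordK pi2 w = 0"
  shows "vclose pi2 (w\<^sup>2 - 1) 3"
proof -
  obtain u v where uv: "u \<in> OK" "v \<in> OK" "\<not> dvdO pi2 u" "\<not> dvdO pi2 v" "w = pi2 powi 0 * u / v"
    using vrep_exists[OF primeO_pi2 w(1,2)] w(3) by (auto simp: vrep_def)
  obtain a b where ab: "u = of_int a + of_int b * om" using uv(1) OK_iff by blast
  obtain c d where cd: "v = of_int c + of_int d * om" using uv(2) OK_iff by blast
  have ac: "odd a" "odd c" using uv(3,4) dvd_pi2_coord ab cd by auto
  define X where "X = a^2 - 2*b^2 - c^2 + 2*d^2"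
  define Y where "Y = 2*a*b + b^2 - 2*c*d - d^2"
  have uv2: "u^2 - v^2 = of_int X + of_int Y * om"
    by (simp add: ab cd X_def Y_def power2_eq_square algebra_simps om_mult_om')
  obtain k1 where k1: "a^2 = 8 * k1 + 1" using odd_sq8 ac(1) by blast
  obtain k2 where k2: "c^2 = 8 * k2 + 1" using odd_sq8 ac(2) by blast
  obtain m1 where m1: "b * (a + b) = 2 * m1" using even_b_ab[OF ac(1), of b] by blast
  obtain m2 where m2: "d * (c + d) = 2 * m2" using even_b_ab[OF ac(2), of d] by blast
  have "X - 2 * Y = a^2 - c^2 - 4 * (b * (a + b)) + 4 * (d * (c + d))"
    by (simp add: X_def Y_def power2_eq_square algebra_simps)
  then have "X = 2 * Y + 8 * (k1 - k2 - m1 + m2)" using k1 k2 m1 m2 by simp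
  from cube_dvd[OF this] uv2 obtain kk where kk: "kk \<in> OK" "u^2 - v^2 = pi2 ^ 3 * kk"
    using OK_I by metis
  have vnz: "v \<noteq> 0" using uv by auto
  have wu: "w = u / v" using uv(5) by simp
  have "w\<^sup>2 - 1 = (u^2 - v^2) / v^2" using vnz by (simp add: wu power_divide field_simps)
  then have "w\<^sup>2 - 1 = (pi2 ^ 3 * kk) * inverse (v^2)" using kk(2) by (simp add: divide_inverse)
  moreover have "vclose pi2 (pi2 ^ 3 * kk) 3" using vclose_pow_dvd[OF primeO_pi2 kk(1), of 3] by simp
  moreover have "vclose pi2 (inverse (v^2)) 0"
  proof -
    have "ordK pi2 (v^2) = 0" using ordK_power[OF primeO_pi2 OK_Kfield[OF uv(2)] vnz, of 2]
      ordK_unit[OF primeO_pi2 uv(2,4)] by simp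
    then show ?thesis using ordK_inverse[OF primeO_pi2, of "v^2"] OK_Kfield[OF uv(2)] vnz
      by (simp add: vclose_def Kfield_power)
  qed
  ultimately show ?thesis
    using vclose_mult[OF primeO_pi2, of "pi2 ^ 3 * kk" "inverse (v^2)" 3 0] kk(1) uv(2)
    by (simp add: OK_Kfield OK_mult OK_power pi2_OK Kfield_inverse Kfield_power)
qed

lemma ordK_pert:
  assumes P: "primeO p" and "x \<in> Kfield" "y \<in> Kfield" "x \<noteq> 0" "ordK p x = n" "vclose p y (n + 1)"
  shows "x + y \<noteq> 0 \<and> ordK p (x + y) = n"
  using ordK_add_strict[OF P, of x y "n+1"] assms by simp

lemma not_vclose: "primeO p \<Longrightarrow> x \<noteq> 0 \<Longrightarrow> ordK p x < m \<Longrightarrow> \<not> vclose p x m"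
  by (simp add: vclose_def)

lemma ordK_pi2_m1: "ordK pi2 (-1) = 0"
  using ordK_uminus[OF primeO_pi2, of 1] ordK_1[OF primeO_pi2] by simp
lemma ordK_pi2_m2: "ordK pi2 (-2) = 1"
  using ordK_uminus[OF primeO_pi2, of 2] ordK_pi2_2 by simp
lemma ordK_pi2_m4: "ordK pi2 (-4) = 2"
  using ordK_uminus[OF primeO_pi2, of 4] ordK_pi2_4 by simp

lemma vclose_sq: "x \<in> Kfield \<Longrightarrow> vclose pi2 x m \<Longrightarrow> vclose pi2 (x ^ 2) (2 * m)"
proof -
  assume a: "x \<in> Kfield" "vclose pi2 x m"
  have e: "x ^ 2 = x * x" "2 * m = m + m" by (simp_all add: power2_eq_square)
  show ?thesis unfolding e by (rule vclose_mult[OF primeO_pi2 a(1) a(1) a(2) a(2)])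
qed

lemma vclose_4: "x \<in> Kfield \<Longrightarrow> vclose pi2 x m \<Longrightarrow> vclose pi2 (x ^ 4) (4 * m)"
proof -
  assume "x \<in> Kfield" "vclose pi2 x m"
  then have "vclose pi2 ((x^2)^2) (2 * (2 * m))" using vclose_sq Kfield_power by blast
  then show ?thesis by (simp add: power_mult[symmetric])
qed

lemma vclose_OKmult: "a \<in> OK \<Longrightarrow> x \<in> Kfield \<Longrightarrow> vclose pi2 x m \<Longrightarrow> vclose pi2 (a * x) m"
  using vclose_mult[OF primeO_pi2, of a x 0 m] vclose_OK[OF primeO_pi2] OK_Kfield by simp

lemma core_B:
  assumes p: "p mod 8 = 1" and q: "q = p + 2" and zw: "z \<in> Kfield" "w \<in> Kfield"
    and R: "vclose pi2 (Cres p q (-1) z w) 10"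
  shows False
proof -
  obtain k where pk: "p = 8 * k + 1" using p by (metis mod_div_mult_eq add.commute mult.commute)
  define P where "P = (of_nat p :: complex)"
  define Q where "Q = (of_nat q :: complex)"
  define RR where "RR = Cres p q (-1) z w"
  have Pk: "P = 8 * of_nat k + 1" by (simp add: P_def pk)
  have Qk: "Q = 8 * of_nat k + 3" by (simp add: Q_def q pk)
  have RK: "RR \<in> Kfield" using zw unfolding RR_def Cres_def by (auto intro!: Kf)
  have Req: "RR = - (w^2) - (1 + (P + Q) * z^2 + P * Q * z^4)"
    unfolding RR_def Cres_def P_def Q_def by (simp add: algebra_simps power2_eq_square)
  have PQs: "P + Q = of_int (2^2 * (4 * int k + 1))" by (simp add: Pk Qk)
  have vPQs: "vclose pi2 (P + Q) 2" unfolding PQs using vclose_pi2_int[of 2 "2^2 * (4 * int k + 1)"]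
    by (simp only: dvd_triv_left of_nat_numeral)
  have PQK: "P + Q \<in> Kfield" "P * Q \<in> OK" "P \<in> OK" "Q \<in> OK" "P \<in> Kfield" "Q \<in> Kfield"
    by (auto simp: P_def Q_def intro: OK_mult Kfield_add)
  have R10: "vclose pi2 RR 10" using R by (simp add: RR_def)
  have R3: "vclose pi2 RR 3" using vclose_mono[OF primeO_pi2 R10] by simp
  have v8k: "vclose pi2 (8 * of_nat k) 3" using vclose_pi2_int[of 3 "8 * int k"] by simp
  consider (i) "vclose pi2 z 1" | (ii) "z \<noteq> 0" "ordK pi2 z = 0" | (iii) "z \<noteq> 0" "ordK pi2 z \<le> -1"
  proof (cases "z = 0")
    case False
    then show ?thesis using that by (cases "ordK pi2 z \<ge> 1"; cases "ordK pi2 z = 0") (auto simp: vclose_def)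
  qed (use that in \<open>simp add: vclose_def\<close>)
  then show False
  proof cases
    case i
    define E where "E = (P + Q) * z^2 + P * Q * z^4 + RR"
    have z2: "vclose pi2 (z^2) 2" using vclose_sq[OF zw(1) i] by simp
    have z4: "vclose pi2 (z^4) 4" using vclose_4[OF zw(1) i] by simp
    have e1: "vclose pi2 ((P + Q) * z^2) 3"
      using vclose_mult[OF primeO_pi2 PQK(1) Kfield_power[OF zw(1)] vPQs z2] vclose_mono[OF primeO_pi2] by fastforce
    have e2: "vclose pi2 (P * Q * z^4) 3"
      using vclose_OKmult[OF PQK(2) Kfield_power[OF zw(1)] z4] vclose_mono[OF primeO_pi2] by fastforce
    have EK: "E \<in> Kfield" unfolding E_def using zw RK PQK by (auto intro!: Kf simp: OK_Kfield)
    have a1K: "(P + Q) * z^2 \<in> Kfield" "P * Q * z^4 \<in> Kfield"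
      using zw PQK by (auto intro!: Kf simp: OK_Kfield)
    have E3: "vclose pi2 E 3" unfolding E_def
      by (rule vclose_add[OF primeO_pi2 Kfield_add[OF a1K] RK vclose_add[OF primeO_pi2 a1K e1 e2] R3])
    have w2: "w^2 = -1 + (- E)" unfolding E_def Req by (simp add: algebra_simps)
    have "w^2 \<noteq> 0 \<and> ordK pi2 (w^2) = 0"
      unfolding w2 using ordK_pert[OF primeO_pi2, of "-1" "-E" 0] ordK_pi2_m1 EK
        vclose_uminus[OF primeO_pi2 EK] vclose_mono[OF primeO_pi2, of "-E" 3 1] E3 by (simp add: Kf)
    then have wnz: "w \<noteq> 0" and "ordK pi2 w = 0"
      using ordK_power[OF primeO_pi2 zw(2), of 2] by auto
    then have S: "vclose pi2 (w^2 - 1) 3" using sq_unit_pi2 zw(2) by blast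
    have m2: "-2 = (w^2 - 1) + E" using w2 by simp
    have "vclose pi2 ((w^2 - 1) + E) 3"
      by (rule vclose_add[OF primeO_pi2 _ EK S E3]) (use zw in \<open>auto intro!: Kf\<close>)
    then have "vclose pi2 (-2) 3" unfolding m2[symmetric] .
    then show False using not_vclose[OF primeO_pi2, of "-2" 3] ordK_pi2_m2 by simp
  next
    case ii
    define f where "f = z^2 - 1"
    have f3: "vclose pi2 f 3" using sq_unit_pi2[OF zw(1) ii] by (simp add: f_def)
    have fK: "f \<in> Kfield" using zw by (auto simp: f_def intro!: Kf)
    define A1 where "A1 = 1 + P * z^2"
    define A2 where "A2 = 1 + Q * z^2"
    have A1e: "A1 = 2 + (8 * of_nat k + P * f)" by (simp add: A1_def f_def Pk algebra_simps)
    have A2e: "A2 = 4 + (8 * of_nat k + Q * f)" by (simp add: A2_def f_def Qk algebra_simps)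
    have k8K: "8 * of_nat k \<in> Kfield" by (simp add: Kfield_mult)
    have PfK: "P * f \<in> Kfield" "Q * f \<in> Kfield" using PQK fK by (simp_all add: Kfield_mult)
    have g1: "vclose pi2 (8 * of_nat k + P * f) 3" "8 * of_nat k + P * f \<in> Kfield"
      using vclose_add[OF primeO_pi2 k8K PfK(1) v8k vclose_OKmult[OF PQK(3) fK f3]] Kfield_add[OF k8K PfK(1)]
      by auto
    have g2: "vclose pi2 (8 * of_nat k + Q * f) 3" "8 * of_nat k + Q * f \<in> Kfield"
      using vclose_add[OF primeO_pi2 k8K PfK(2) v8k vclose_OKmult[OF PQK(4) fK f3]] Kfield_add[OF k8K PfK(2)]
      by auto
    have a1: "A1 \<noteq> 0 \<and> ordK pi2 A1 = 1" unfolding A1e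
      using ordK_pert[OF primeO_pi2 _ g1(2) _ ordK_pi2_2] g1(1) vclose_mono[OF primeO_pi2 g1(1)] by simp
    have a2: "A2 \<noteq> 0 \<and> ordK pi2 A2 = 2" unfolding A2e
      using ordK_pert[OF primeO_pi2 _ g2(2) _ ordK_pi2_4] vclose_mono[OF primeO_pi2 g2(1)] by simp
    have AK: "A1 \<in> Kfield" "A2 \<in> Kfield" using zw PQK by (auto simp: A1_def A2_def intro!: Kf simp: OK_Kfield)
    have F: "A1 * A2 \<noteq> 0" "ordK pi2 (A1 * A2) = 3"
      using a1 a2 ordK_mult[OF primeO_pi2 AK] by auto
    have "- (w^2) = A1 * A2 + RR"
      unfolding Req by (simp add: A1_def A2_def algebra_simps power2_eq_square power4_eq_xxxx)
    moreover have "A1 * A2 + RR \<noteq> 0 \<and> ordK pi2 (A1 * A2 + RR) = 3"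
      using ordK_pert[OF primeO_pi2 Kfield_mult[OF AK] RK F] vclose_mono[OF primeO_pi2 R10] by simp
    ultimately have "w \<noteq> 0" "ordK pi2 (- (w^2)) = 3" by auto
    moreover have "ordK pi2 (- (w^2)) = 2 * ordK pi2 w"
      using ordK_uminus[OF primeO_pi2 Kfield_power[OF zw(2)]] ordK_power[OF primeO_pi2 zw(2) \<open>w \<noteq> 0\<close>, of 2]
        \<open>w \<noteq> 0\<close> by simp
    ultimately show False by presburger
  next
    case iii
    define t where "t = inverse z"
    have tK: "t \<in> Kfield" using zw by (simp add: t_def Kfield_inverse)
    have t1: "vclose pi2 t 1" using ordK_inverse[OF primeO_pi2 zw(1) iii(1)] iii
      by (simp add: t_def vclose_def)
    define y where "y = w * t^2"
    define E where "E = t^4 + (P + Q) * t^2 + RR * t^4"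
    have t2: "vclose pi2 (t^2) 2" using vclose_sq[OF tK t1] by simp
    have t4: "vclose pi2 (t^4) 4" using vclose_4[OF tK t1] by simp
    have e1: "vclose pi2 ((P + Q) * t^2) 3"
      using vclose_mult[OF primeO_pi2 PQK(1) Kfield_power[OF tK] vPQs t2] vclose_mono[OF primeO_pi2] by fastforce
    have e2: "vclose pi2 (RR * t^4) 3"
      using vclose_mult[OF primeO_pi2 RK Kfield_power[OF tK] R3 t4] vclose_mono[OF primeO_pi2] by fastforce
    have EK: "E \<in> Kfield" unfolding E_def using tK RK PQK by (auto intro!: Kf)
    have a1K: "t^4 \<in> Kfield" "(P + Q) * t^2 \<in> Kfield" "RR * t^4 \<in> Kfield"
      using tK RK PQK by (auto intro!: Kf simp: OK_Kfield)
    have t43: "vclose pi2 (t^4) 3" using vclose_mono[OF primeO_pi2 t4] by simp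
    have E3: "vclose pi2 E 3" unfolding E_def
      by (rule vclose_add[OF primeO_pi2 Kfield_add[OF a1K(1,2)] a1K(3) vclose_add[OF primeO_pi2 a1K(1,2) t43 e1] e2])
    have yeq: "- (y^2) = P * Q + E"
      using iii(1) unfolding y_def E_def t_def Req by (simp add: field_simps power2_eq_square power4_eq_xxxx)
    define M where "M = 8 * int k * int k + 4 * int k"
    have PQ: "P * Q = of_int (3 + 8 * M)" by (simp add: Pk Qk M_def algebra_simps)
    have "p \<noteq> 0" using p by auto
    moreover have "P * Q = of_nat (p * q)" by (simp add: P_def Q_def)
    moreover have "p * q \<noteq> 0" using \<open>p \<noteq> 0\<close> q by simp
    ultimately have PQnz: "P * Q \<noteq> 0" by (metis of_nat_eq_0_iff)
    have "ordK pi2 (P * Q) = 0" unfolding PQ by (rule ordK_pi2_odd) simp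
    then have "ordK pi2 (- (P * Q)) = 0"
      using ordK_uminus[OF primeO_pi2 _ PQnz] PQK OK_Kfield by simp
    moreover note PQnz
    moreover have y2: "y^2 = - (P * Q) + (- E)" using arg_cong[OF yeq, of uminus] by simp
    ultimately have "y^2 \<noteq> 0 \<and> ordK pi2 (y^2) = 0"
      using ordK_pert[OF primeO_pi2, of "- (P * Q)" "-E" 0] EK PQK vclose_uminus[OF primeO_pi2 EK]
        vclose_mono[OF primeO_pi2, of "-E" 3 1] E3 by (simp add: Kf OK_Kfield)
    moreover have yK: "y \<in> Kfield" using zw tK by (auto simp: y_def intro!: Kf)
    ultimately have ynz: "y \<noteq> 0" and "ordK pi2 y = 0"
      using ordK_power[OF primeO_pi2 yK, of 2] by auto
    then have S: "vclose pi2 (y^2 - 1) 3" using sq_unit_pi2[OF yK] by blast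
    have m4: "-4 = (y^2 - 1) + (of_int (8 * M) + E)" using y2 PQ by simp
    have v8M: "vclose pi2 (of_int (8 * M)) 3" using vclose_pi2_int[of 3 "8 * M"] by simp
    have "vclose pi2 (of_int (8 * M) + E) 3"
      using vclose_add[OF primeO_pi2 Kfield_of_int EK v8M E3] .
    moreover have y21K: "y^2 - 1 \<in> Kfield" using yK by (auto intro!: Kf)
    ultimately have "vclose pi2 ((y^2 - 1) + (of_int (8 * M) + E)) 3"
      using vclose_add[OF primeO_pi2 y21K Kfield_add[OF Kfield_of_int EK] S] by blast
    then have "vclose pi2 (-4) 3" unfolding m4[symmetric] .
    then show False using not_vclose[OF primeO_pi2, of "-4" 3] ordK_pi2_m4 by simp
  qed
qed


definition newton :: "complex \<Rightarrow> complex \<Rightarrow> complex" where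
  "newton A x = x - (x^2 - A) * inverse (2 * x)"

lemma vclose_zero [simp]: "vclose p 0 m" by (simp add: vclose_def)

context
  fixes p assumes P: "primeO p"
begin

lemma vclose_inv2x:
  assumes "x \<in> Kfield" "x \<noteq> 0" "ordK p x = a" "ordK p 2 \<le> c"
  shows "vclose p (inverse (2 * x)) (- c - a)"
proof -
  have "ordK p (2 * x) = ordK p 2 + a" using ordK_mult[OF P, of 2 x] assms by simp
  then have "ordK p (inverse (2 * x)) = - ordK p 2 - a"
    using ordK_inverse[OF P, of "2 * x"] assms by (simp add: Kfield_mult)
  then show ?thesis using assms by (simp add: vclose_def)
qed

lemma newton_step:
  assumes A: "A \<in> Kfield" and x: "x \<in> Kfield" "x \<noteq> 0" "ordK p x = a"
    and c: "ordK p 2 \<le> c" "0 \<le> c" and n: "0 \<le> n"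
    and E: "vclose p (x^2 - A) (2 * a + 2 * c + 1 + n)"
  shows "newton A x \<in> Kfield \<and> newton A x \<noteq> 0 \<and> ordK p (newton A x) = a \<and>
         vclose p (newton A x - x) (a + c + 1 + n) \<and>
         vclose p ((newton A x)^2 - A) (2 * a + 2 * c + 1 + (n + 1))"
proof -
  define e where "e = x^2 - A"
  define i where "i = inverse (2 * x)"
  have eK: "e \<in> Kfield" and iK: "i \<in> Kfield" using A x by (auto simp: e_def i_def intro!: Kf)
  have vi: "vclose p i (- c - a)" using vclose_inv2x[OF x c(1)] by (simp add: i_def)
  have ve: "vclose p e (2 * a + 2 * c + 1 + n)" using E by (simp add: e_def)
  have vd: "vclose p (e * i) (a + c + 1 + n)"
    using vclose_mult[OF P eK iK ve vi] by (simp add: algebra_simps)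
  have d: "newton A x = x + (- (e * i))" by (simp add: newton_def e_def i_def)
  have dK: "- (e * i) \<in> Kfield" using eK iK by (auto intro!: Kf)
  have vd': "vclose p (- (e * i)) (a + c + 1 + n)" using vclose_uminus[OF P _ vd] eK iK by (simp add: Kf)
  have "vclose p (- (e * i)) (a + 1)" using vclose_mono[OF P vd'] c n by simp
  then have nz: "newton A x \<noteq> 0 \<and> ordK p (newton A x) = a"
    unfolding d using ordK_pert[OF P x(1) dK x(2) x(3)] by simp
  have nK: "newton A x \<in> Kfield" unfolding d using Kfield_add[OF x(1) dK] .
  have sq: "(newton A x)^2 - A = (e * i)^2"
    using x(2) by (simp add: newton_def e_def i_def field_simps power2_eq_square)
  have eiK: "e * i \<in> Kfield" using eK iK by (simp add: Kf)
  have eq2: "(e * i)^2 = (e * i) * (e * i)" "2 * (a + c + 1 + n) = (a + c + 1 + n) + (a + c + 1 + n)"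
    by (simp_all add: power2_eq_square)
  have "vclose p ((e * i)^2) (2 * (a + c + 1 + n))"
    unfolding eq2 by (rule vclose_mult[OF P eiK eiK vd vd])
  then have "vclose p ((newton A x)^2 - A) (2 * a + 2 * c + 1 + (n + 1))"
    unfolding sq using vclose_mono[OF P] c n by fastforce
  moreover have "newton A x - x = - (e * i)" by (simp add: d)
  ultimately show ?thesis using nz nK vd' by simp
qed

lemma hensel:
  assumes A: "A \<in> Kfield" and w0: "w0 \<in> Kfield" "w0 \<noteq> 0"
    and c: "ordK p 2 \<le> c" "0 \<le> c"
    and E: "vclose p (w0^2 - A) (2 * ordK p w0 + 2 * c + 1)"
  shows "\<exists>w. (\<forall>n. w n \<in> Kfield) \<and> vcauchy p w \<and> vnull p (\<lambda>n. (w n)^2 - A) \<and>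
     (\<forall>n. w n \<noteq> 0 \<and> ordK p (w n) = ordK p w0)"
proof -
  define a where "a = ordK p w0"
  define ws where "ws n = (newton A ^^ n) w0" for n
  have inv: "ws n \<in> Kfield \<and> ws n \<noteq> 0 \<and> ordK p (ws n) = a \<and>
      vclose p ((ws n)^2 - A) (2 * a + 2 * c + 1 + int n)" for n
  proof (induction n)
    case 0 then show ?case using w0 E by (simp add: ws_def a_def)
  next
    case (Suc n)
    have "ws (Suc n) = newton A (ws n)" by (simp add: ws_def)
    then show ?case using newton_step[OF A _ _ _ c, of "ws n" a "int n"] Suc by (simp add: add.assoc)
  qed
  have step: "vclose p (ws (Suc n) - ws n) (a + c + 1 + int n)" for n
    using newton_step[OF A _ _ _ c, of "ws n" a "int n"] inv[of n] by (simp add: ws_def)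
  have diff: "vclose p (ws j - ws i) (a + c + 1 + int i)" if "i \<le> j" for i j
    using that
  proof (induction j)
    case 0 then show ?case by simp
  next
    case (Suc j)
    show ?case
    proof (cases "i = Suc j")
      case True then show ?thesis by simp
    next
      case False
      then have ij: "i \<le> j" using Suc by simp
      have K1: "ws (Suc j) - ws j \<in> Kfield" "ws j - ws i \<in> Kfield" using inv by (simp_all add: Kf)
      have "vclose p (ws (Suc j) - ws j) (a + c + 1 + int i)"
        using vclose_mono[OF P step[of j]] ij by simp
      then have "vclose p ((ws (Suc j) - ws j) + (ws j - ws i)) (a + c + 1 + int i)"
        by (rule vclose_add[OF P K1 _ Suc.IH[OF ij]])
      then show ?thesis by simp
    qed
  qed
  have "vcauchy p ws" unfolding vcauchy_def
  proof
    fix m :: int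
    define N where "N = nat (m - (a + c + 1))"
    have "vclose p (ws i - ws j) m" if "i \<ge> N" "j \<ge> N" for i j
    proof (cases "i \<le> j")
      case True
      then have "vclose p (ws j - ws i) m" using vclose_mono[OF P diff[OF True]] that by (simp add: N_def)
      moreover have "ws j - ws i \<in> Kfield" using inv by (simp add: Kf)
      ultimately have "vclose p (- (ws j - ws i)) m" using vclose_uminus[OF P] by blast
      then show ?thesis by simp
    next
      case False
      then have "j \<le> i" by simp
      then show ?thesis using vclose_mono[OF P diff[OF \<open>j \<le> i\<close>]] that by (simp add: N_def)
    qed
    then show "\<exists>N. \<forall>i\<ge>N. \<forall>j\<ge>N. vclose p (ws i - ws j) m" by blast
  qed
  moreover have "vnull p (\<lambda>n. (ws n)^2 - A)" unfolding vnull_def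
  proof
    fix m :: int
    define N where "N = nat (m - (2 * a + 2 * c + 1))"
    have "vclose p ((ws i)^2 - A) m" if "i \<ge> N" for i
      using vclose_mono[OF P] inv[of i] that by (simp add: N_def) (smt (verit) of_nat_mono nat_le_iff)
    then show "\<exists>N. \<forall>i\<ge>N. vclose p ((ws i)^2 - A) m" by blast
  qed
  ultimately show ?thesis using inv unfolding a_def by blast
qed

end


lemma leg_vals: "Legendre a p \<in> {-1, 0, 1}"
  by (simp add: Legendre_def)

lemma cong_small_eq:
  fixes l :: nat
  assumes "2 < l" "x \<in> {-1,0,1::int}" "y \<in> {-1,0,1::int}" "[x = y] (mod int l)"
  shows "x = y"
proof -
  have "int l dvd (x - y)" using assms(4) by (simp add: cong_iff_dvd_diff)
  moreover have "\<bar>x - y\<bar> < int l" using assms by auto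
  ultimately show ?thesis
  proof (cases "x - y = 0")
    case False
    assume "int l dvd (x - y)" "\<bar>x - y\<bar> < int l"
    with dvd_imp_le_int[OF False] show ?thesis by fastforce
  qed simp
qed

context
  fixes l :: nat assumes L: "prime l" "2 < l"
begin

lemma euler: "[Legendre a (int l) = a ^ ((l - 1) div 2)] (mod int l)"
  using euler_criterion[OF L] .

lemma leg_mult: "Legendre (a * b) (int l) = Legendre a (int l) * Legendre b (int l)"
proof -
  have "[Legendre (a * b) (int l) = (a * b) ^ ((l - 1) div 2)] (mod int l)" by (rule euler)
  moreover have "[a ^ ((l - 1) div 2) * b ^ ((l - 1) div 2) = Legendre a (int l) * Legendre b (int l)] (mod int l)"
    using euler[of a] euler[of b] by (simp add: cong_mult cong_sym)
  ultimately have "[Legendre (a * b) (int l) = Legendre a (int l) * Legendre b (int l)] (mod int l)"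
    by (simp add: power_mult_distrib cong_trans)
  moreover have "Legendre a (int l) * Legendre b (int l) \<in> {-1,0,1}"
    using leg_vals[of a "int l"] leg_vals[of b "int l"] by auto
  ultimately show ?thesis using cong_small_eq[OF L(2) leg_vals] by metis
qed

lemma leg_m1: "Legendre (-1) (int l) = (-1) ^ ((l - 1) div 2)"
proof -
  have "(-1::int) ^ ((l - 1) div 2) \<in> {-1,0,1}" by (cases "even ((l - 1) div 2)") auto
  then show ?thesis by (rule cong_small_eq[OF L(2) leg_vals _ euler])
qed

end


lemma leg_l7:
  assumes "prime l" "l \<noteq> 7"
  shows "Legendre (int l) 7 = (if l mod 7 \<in> {1,2,4} then 1 else -1)"
proof -
  have e: "[Legendre (int l) 7 = (int l) ^ 3] (mod 7)"
    using euler_criterion[of 7 "int l"] by simp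
  have "l mod 7 \<noteq> 0"
  proof
    assume "l mod 7 = 0"
    then have "7 dvd l" by auto
    then show False using assms prime_nat_iff[of l] by (metis numeral_eq_one_iff semiring_norm(86))
  qed
  have m: "[(int l) ^ 3 = (int (l mod 7)) ^ 3] (mod 7)"
    by (intro cong_pow) (simp add: cong_def zmod_int)
  have "l mod 7 < 7" by simp
  then consider "l mod 7 = 1" | "l mod 7 = 2" | "l mod 7 = 3" | "l mod 7 = 4" | "l mod 7 = 5" | "l mod 7 = 6"
    using \<open>l mod 7 \<noteq> 0\<close> by linarith
  then show ?thesis
  proof cases
    case 1
    have "[Legendre (int l) 7 = 1] (mod 7)" using cong_trans[OF e m] 1 by simp
    then show ?thesis using cong_small_eq[of 7 "Legendre (int l) 7" 1] leg_vals 1 by simp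
  next
    case 2
    have "[Legendre (int l) 7 = 8] (mod 7)" using cong_trans[OF e m] 2 by simp
    then have "[Legendre (int l) 7 = 1] (mod 7)" by (simp add: cong_def)
    then show ?thesis using cong_small_eq[of 7 "Legendre (int l) 7" 1] leg_vals 2 by simp
  next
    case 3
    have "[Legendre (int l) 7 = 27] (mod 7)" using cong_trans[OF e m] 3 by simp
    then have "[Legendre (int l) 7 = -1] (mod 7)" by (simp add: cong_def)
    then show ?thesis using cong_small_eq[of 7 "Legendre (int l) 7" "-1"] leg_vals 3 by simp
  next
    case 4
    have "[Legendre (int l) 7 = 64] (mod 7)" using cong_trans[OF e m] 4 by simp
    then have "[Legendre (int l) 7 = 1] (mod 7)" by (simp add: cong_def)
    then show ?thesis using cong_small_eq[of 7 "Legendre (int l) 7" 1] leg_vals 4 by simp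
  next
    case 5
    have "[Legendre (int l) 7 = 125] (mod 7)" using cong_trans[OF e m] 5 by simp
    then have "[Legendre (int l) 7 = -1] (mod 7)" by (simp add: cong_def)
    then show ?thesis using cong_small_eq[of 7 "Legendre (int l) 7" "-1"] leg_vals 5 by simp
  next
    case 6
    have "[Legendre (int l) 7 = 216] (mod 7)" using cong_trans[OF e m] 6 by simp
    then have "[Legendre (int l) 7 = -1] (mod 7)" by (simp add: cong_def)
    then show ?thesis using cong_small_eq[of 7 "Legendre (int l) 7" "-1"] leg_vals 6 by simp
  qed
qed

lemma leg_m7:
  assumes "prime l" "2 < l" "l \<noteq> 7"
  shows "Legendre (-7) (int l) = Legendre (int l) 7"
proof -
  define h where "h = (l - 1) div 2"
  have qr: "Legendre 7 (int l) * Legendre (int l) 7 = (-1) ^ (3 * h)"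
    using Quadratic_Reciprocity[of 7 l] assms by (simp add: h_def)
  have l7: "Legendre (int l) 7 \<in> {-1, 1}" using leg_l7[OF assms(1,3)] by simp
  then have sq: "Legendre (int l) 7 * Legendre (int l) 7 = 1" by auto
  have "Legendre 7 (int l) = (-1) ^ (3 * h) * Legendre (int l) 7"
    using arg_cong[OF qr, of "\<lambda>x. x * Legendre (int l) 7"] sq by (simp add: mult.assoc)
  moreover have "Legendre (-7) (int l) = Legendre (-1) (int l) * Legendre 7 (int l)"
    using leg_mult[OF assms(1,2), of "-1" 7] by simp
  moreover have "Legendre (-1) (int l) = (-1) ^ h" using leg_m1[OF assms(1,2)] by (simp add: h_def)
  ultimately have "Legendre (-7) (int l) = (-1) ^ h * (-1) ^ (3 * h) * Legendre (int l) 7" by simp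
  also have "(-1::int) ^ h * (-1) ^ (3 * h) = 1"
    by (simp add: power_add[symmetric])
  finally show ?thesis by simp
qed

lemma leg1_QR: "Legendre a p = 1 \<Longrightarrow> \<exists>y. [y^2 = a] (mod p)"
  unfolding Legendre_def QuadRes_def by (auto split: if_splits)

lemma split_root:
  assumes "prime l" "2 < l" "l mod 7 \<in> {0,1,2,4}"
  shows "\<exists>x::int. [x^2 = -7] (mod int l)"
proof (cases "l = 7")
  case True then show ?thesis by (intro exI[of _ 0]) (simp add: cong_def)
next
  case False
  have "l mod 7 \<noteq> 0"
  proof
    assume "l mod 7 = 0"
    then have d7: "7 dvd l" by auto
    have H: "\<forall>m. m dvd l \<longrightarrow> m = 1 \<or> m = l" using assms(1) by (simp add: prime_nat_iff)
    have "(7::nat) = 1 \<or> 7 = l" using mp[OF spec[OF H, of 7] d7] .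
    then show False using False by auto
  qed
  then have "Legendre (-7) (int l) = 1" using leg_m7[OF assms(1,2) False] leg_l7[OF assms(1) False] assms(3)
    by (auto split: if_splits)
  then show ?thesis using leg1_QR by blast
qed

lemma inert_root:
  assumes "prime l" "2 < l" "l mod 7 \<in> {3,5,6}"
  shows "(\<exists>a::int. [a^2 = -1] (mod int l)) \<or> (\<exists>c::int. [c^2 = 7] (mod int l))"
proof -
  have "l \<noteq> 7" using assms by auto
  then have m7: "Legendre (-7) (int l) = -1" using leg_m7[OF assms(1,2)] leg_l7[OF assms(1)] assms(3)
    by auto
  show ?thesis
  proof (cases "Legendre (-1) (int l) = 1")
    case True then show ?thesis using leg1_QR by blast
  next
    case False
    have "Legendre (-7) (int l) = Legendre (-1) (int l) * Legendre 7 (int l)"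
      using leg_mult[OF assms(1,2), of "-1" 7] by simp
    moreover have "Legendre (-1) (int l) \<in> {-1, 0, 1}" "Legendre 7 (int l) \<in> {-1, 0, 1}" using leg_vals by auto
    ultimately have "Legendre 7 (int l) = 1" using m7 False by auto
    then show ?thesis using leg1_QR by blast
  qed
qed


lemma dvdO_int_coord: "dvdO (of_int n) (of_int a + of_int b * om) \<Longrightarrow> n dvd a \<and> n dvd b"
proof -
  assume "dvdO (of_int n) (of_int a + of_int b * om)"
  then obtain k where k: "k \<in> OK" "of_int a + of_int b * om = of_int n * k" by (auto simp: dvdO_def)
  then obtain e f where ef: "k = of_int e + of_int f * om" by (auto simp: OK_iff)
  have "of_int a + of_int b * om = of_int (n * e) + of_int (n * f) * om" using k(2) by (simp add: ef algebra_simps)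
  then have "a = n * e \<and> b = n * f" by (rule OK_coord_eq)
  then show ?thesis by simp
qed

lemma dvdO_of_int: "n dvd m \<Longrightarrow> dvdO (of_int n) (of_int m)"
  unfolding dvdO_def by (auto intro!: bexI[of _ "of_int (m div n)"])

lemma sqrtm7_coord: "sqrtm7 = of_int (-1) + of_int 2 * om" by (simp add: sqrtm7_om)
lemma sqrtm7_OK: "sqrtm7 \<in> OK" unfolding sqrtm7_coord by (rule OK_I)

lemma not_primeO_split:
  assumes "prime l" "2 < l" "l mod 7 \<in> {0,1,2,4}"
  shows "\<not> primeO (of_nat l)"
proof
  assume P: "primeO (of_nat l)"
  obtain x where x: "[x^2 = -7] (mod int l)" using split_root[OF assms] by blast
  then have "int l dvd (x^2 + 7)" by (simp add: cong_iff_dvd_diff)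
  then have d: "dvdO (of_nat l) (of_int (x^2 + 7))" using dvdO_of_int[of "int l"] by (simp only: of_int_of_nat_eq)
  have e: "of_int (x^2 + 7) = (of_int (x - 1) + of_int 2 * om) * (of_int (x + 1) + of_int (-2) * om)"
    by (simp add: algebra_simps power2_eq_square om_mult_om')
  have "dvdO (of_nat l) (of_int (x - 1) + of_int 2 * om) \<or> dvdO (of_nat l) (of_int (x + 1) + of_int (-2) * om)"
    using primeO_dvd_mult[OF P OK_I OK_I] d unfolding e by blast
  then have "int l dvd 2"
    using dvdO_int_coord[of "int l"] by (metis dvd_minus_iff of_int_of_nat_eq)
  then have "int l \<le> 2" using zdvd_imp_le[of "int l" 2] by simp
  then show False using assms(2) by simp
qed

lemma inert_w0:
  assumes "prime l" "2 < l" "l mod 7 \<in> {3,5,6}"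
  shows "\<exists>w0\<in>OK. dvdO (of_nat l) (w0^2 + 1)"
proof -
  consider a where "[a^2 = -1] (mod int l)" | c where "[c^2 = 7] (mod int l)"
    using inert_root[OF assms] by blast
  then show ?thesis
  proof cases
    case (1 a)
    then have "int l dvd (a^2 + 1)" by (simp add: cong_iff_dvd_diff)
    then have "dvdO (of_nat l) (of_int (a^2 + 1))" using dvdO_of_int[of "int l"] by (simp only: of_int_of_nat_eq)
    moreover have eq: "(of_int a :: complex)^2 + 1 = of_int (a^2 + 1)" by simp
    ultimately have "dvdO (of_nat l) ((of_int a)^2 + 1)" by (simp only: eq)
    then show ?thesis using OK_of_int by blast
  next
    case (2 c)
    have "\<not> int l dvd 7"
    proof
      assume "int l dvd 7"
      then have "l dvd 7" by presburger
      then have "l \<le> 7" by (simp add: dvd_imp_le)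
      then have "l mod 7 = l \<or> l = 7" by auto
      then show False using assms(3) \<open>l dvd 7\<close> by auto
    qed
    then have "coprime (int l) 7" using assms(1) by (simp add: prime_imp_coprime)
    then obtain t where t: "[7 * t = 1] (mod int l)" using cong_solve_coprime_int[of 7 "int l"]
      by (auto simp: coprime_commute)
    have "[7 * (c * t)^2 = (7 * t) * (7 * t)] (mod int l)"
    proof -
      have "[7 * (c * t)^2 = c^2 * (7 * t^2)] (mod int l)" by (simp add: algebra_simps power2_eq_square)
      moreover have "[c^2 * (7 * t^2) = 7 * (7 * t^2)] (mod int l)" using cong_mult[OF 2 cong_refl] .
      ultimately show ?thesis by (simp add: cong_trans algebra_simps power2_eq_square)
    qed
    moreover have "[(7 * t) * (7 * t) = 1 * 1] (mod int l)" using cong_mult[OF t t] .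
    ultimately have "[7 * (c * t)^2 = 1] (mod int l)" using cong_trans by simp
    then have "int l dvd (1 - 7 * (c * t)^2)" by (simp add: cong_iff_dvd_diff dvd_diff_commute)
    then have dv: "dvdO (of_nat l) (of_int (1 - 7 * (c * t)^2))" using dvdO_of_int[of "int l"] by (simp only: of_int_of_nat_eq)
    have eq: "(of_int (c * t) * sqrtm7)^2 + 1 = of_int (1 - 7 * (c * t)^2)"
      by (simp add: power_mult_distrib sqrtm7_sq)
    have wOK: "of_int (c * t) * sqrtm7 \<in> OK" by (intro OK_mult OK_of_int sqrtm7_OK)
    have "dvdO (of_nat l) ((of_int (c * t) * sqrtm7)^2 + 1)" unfolding eq by (rule dv)
    then show ?thesis using wOK by blast
  qed
qed

lemma cnj_sqrtm7: "cnj sqrtm7 = - sqrtm7" by (simp add: sqrtm7_def)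
lemma pi2bar_cnj: "pi2bar = cnj pi2" by (simp add: pi2_def pi2bar_def cnj_sqrtm7 field_simps)

lemma Kfield_cnj: "x \<in> Kfield \<Longrightarrow> cnj x \<in> Kfield"
proof -
  assume "x \<in> Kfield"
  then obtain y D where "y \<in> OK" "D \<noteq> 0" "x = y / of_int D" by (auto simp: Kfield_iff)
  then have "cnj x = cnj y / of_int D" "cnj y \<in> OK" by (auto simp: OK_cnj)
  then show ?thesis unfolding Kfield_iff using \<open>D \<noteq> 0\<close> by blast
qed

lemma dvdO_cnj: "dvdO a b \<Longrightarrow> dvdO (cnj a) (cnj b)"
  unfolding dvdO_def by (auto intro: OK_cnj)

lemma dvdO_cnj_iff: "dvdO (cnj a) (cnj b) \<longleftrightarrow> dvdO a b"
  using dvdO_cnj[of "cnj a" "cnj b"] dvdO_cnj[of a b] by auto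

lemma OK_cnj_iff: "cnj x \<in> OK \<longleftrightarrow> x \<in> OK"
  using OK_cnj[of x] OK_cnj[of "cnj x"] by auto

lemma cnj_powi: "cnj (x powi n) = (cnj x) powi n"
  by (simp add: power_int_def complex_cnj_power complex_cnj_inverse)

lemma vrep_cnj: "vrep p x n \<Longrightarrow> vrep (cnj p) (cnj x) n"
proof -
  assume "vrep p x n"
  then obtain u v where uv: "u \<in> OK" "v \<in> OK" "\<not> dvdO p u" "\<not> dvdO p v" "x = p powi n * u / v"
    by (auto simp: vrep_def)
  then have "cnj x = cnj p powi n * cnj u / cnj v" by (simp add: cnj_powi)
  moreover have "cnj u \<in> OK" "cnj v \<in> OK" "\<not> dvdO (cnj p) (cnj u)" "\<not> dvdO (cnj p) (cnj v)"
    using uv by (auto simp: OK_cnj dvdO_cnj_iff)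
  ultimately show ?thesis unfolding vrep_def by blast
qed

lemma vrep_cnj_iff: "vrep (cnj p) (cnj x) n \<longleftrightarrow> vrep p x n"
  using vrep_cnj[of "cnj p" "cnj x" n] vrep_cnj[of p x n] by auto

lemma ordK_cnj: "ordK (cnj p) (cnj x) = ordK p x"
  unfolding ordK_vrep vrep_cnj_iff ..

lemma vclose_cnj: "vclose (cnj p) (cnj x) m \<longleftrightarrow> vclose p x m"
  by (simp add: vclose_def ordK_cnj)

lemma primeO_cnj: "primeO p \<Longrightarrow> primeO (cnj p)"
  unfolding primeO_def
proof (intro conjI ballI impI)
  assume a: "p \<in> OK \<and> p \<noteq> 0 \<and> inverse p \<notin> OK \<and> (\<forall>a\<in>OK. \<forall>b\<in>OK. dvdO p (a * b) \<longrightarrow> dvdO p a \<or> dvdO p b)"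
  show "cnj p \<in> OK" using a OK_cnj by blast
  show "cnj p \<noteq> 0" using a by simp
  show "inverse (cnj p) \<notin> OK" using a OK_cnj_iff[of "inverse p"] by (simp add: complex_cnj_inverse)
  fix x y assume xy: "x \<in> OK" "y \<in> OK" "dvdO (cnj p) (x * y)"
  then have "dvdO p (cnj x * cnj y)" using dvdO_cnj[of "cnj p" "x * y"] by simp
  then have "dvdO p (cnj x) \<or> dvdO p (cnj y)" using a xy OK_cnj by blast
  then show "dvdO (cnj p) x \<or> dvdO (cnj p) y" using dvdO_cnj by fastforce
qed

lemma primeO_pi2bar: "primeO pi2bar" unfolding pi2bar_cnj by (rule primeO_cnj[OF primeO_pi2])

lemma Cres_cnj: "Cres p q (cnj d) (cnj z) (cnj w) = cnj (Cres p q d z w)"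
  by (simp add: Cres_def)

lemma Cres_Kfield: "d \<in> Kfield \<Longrightarrow> z \<in> Kfield \<Longrightarrow> w \<in> Kfield \<Longrightarrow> Cres p q d z w \<in> Kfield"
  unfolding Cres_def by (auto intro!: Kf)

lemma loc_solv_cnj: "loc_solv p q pp d \<Longrightarrow> loc_solv p q (cnj pp) (cnj d)"
proof -
  assume "loc_solv p q pp d"
  then obtain z w where zw: "\<forall>n. z n \<in> Kfield \<and> w n \<in> Kfield" "vcauchy pp z" "vcauchy pp w"
    "vnull pp (\<lambda>n. Cres p q d (z n) (w n))" by (auto simp: loc_solv_def)
  have "\<forall>n. cnj (z n) \<in> Kfield \<and> cnj (w n) \<in> Kfield" using zw(1) Kfield_cnj by blast
  moreover have "vcauchy (cnj pp) (\<lambda>n. cnj (z n))" "vcauchy (cnj pp) (\<lambda>n. cnj (w n))"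
    using zw(2,3) unfolding vcauchy_def by (metis complex_cnj_diff vclose_cnj)+
  moreover have "vnull (cnj pp) (\<lambda>n. Cres p q (cnj d) (cnj (z n)) (cnj (w n)))"
    using zw(4) unfolding vnull_def Cres_cnj vclose_cnj .
  ultimately show ?thesis unfolding loc_solv_def
    by (intro exI[of _ "\<lambda>n. cnj (z n)"] exI[of _ "\<lambda>n. cnj (w n)"]) blast
qed

lemma unit_powi_OK: "k \<in> OK \<Longrightarrow> m \<in> OK \<Longrightarrow> k * m = 1 \<Longrightarrow> k powi n \<in> OK"
proof -
  assume km: "k \<in> OK" "m \<in> OK" "k * m = 1"
  then have "inverse k = m" by (metis inverse_unique)
  then show ?thesis using km by (auto simp: power_int_def intro: OK_power)
qed

lemma assoc_vrep:
  assumes "l = pp * k" "k \<in> OK" "m \<in> OK" "k * m = 1" "vrep l x n"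
  shows "vrep pp x n"
proof -
  obtain u v where uv: "u \<in> OK" "v \<in> OK" "\<not> dvdO l u" "\<not> dvdO l v" "x = l powi n * u / v"
    using assms(5) by (auto simp: vrep_def)
  have kn: "k powi n \<in> OK" using unit_powi_OK assms by blast
  have kmn: "k powi (-n) \<in> OK" using unit_powi_OK assms by blast
  have knz: "k \<noteq> 0" using assms(4) by auto
  have inv: "k powi (-n) * k powi n = 1" using knz by (simp add: power_int_minus)
  have x: "x = pp powi n * (k powi n * u) / v" using uv(5) assms(1) by (simp add: power_int_mult_distrib)
  have lpp: "dvdO l pp"
  proof -
    have "pp = l * m" using assms(1,4) by (simp add: mult.assoc)
    then show ?thesis using assms(3) by (simp add: dvdO_self_mult)
  qed
  have "\<not> dvdO pp (k powi n * u)"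
  proof
    assume "dvdO pp (k powi n * u)"
    then have "dvdO pp (k powi (-n) * (k powi n * u))" using dvdO_mult_left kmn by blast
    then have "dvdO pp u" using inv by (simp add: mult.assoc[symmetric])
    then show False using dvdO_trans[OF lpp] uv(3) by blast
  qed
  moreover have "\<not> dvdO pp v" using dvdO_trans[OF lpp] uv(4) by blast
  moreover have "k powi n * u \<in> OK" using kn uv by (simp add: OK_mult)
  ultimately show ?thesis unfolding vrep_def using x uv(2) by blast
qed

lemma assoc_units:
  assumes P: "primeO pp" and L: "primeO l" and d: "dvdO pp l"
  shows "\<exists>k m. l = pp * k \<and> k \<in> OK \<and> m \<in> OK \<and> k * m = 1"
proof -
  obtain k where k: "k \<in> OK" "l = pp * k" using d by (auto simp: dvdO_def)
  have "dvdO l (pp * k)" using k dvdO_refl by simp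
  then have "dvdO l pp \<or> dvdO l k" using primeO_dvd_mult[OF L primeO_OK[OF P] k(1)] by blast
  moreover have "\<not> dvdO l k"
  proof
    assume "dvdO l k"
    then obtain j where j: "j \<in> OK" "k = l * j" by (auto simp: dvdO_def)
    then have "l * 1 = l * (pp * j)" using k(2) by (metis mult.left_commute mult_1_right)
    then have "pp * j = 1" using primeO_nz[OF L] by simp
    then have "inverse pp = j" by (metis inverse_unique)
    then show False using P j(1) by (simp add: primeO_def)
  qed
  ultimately obtain m where m: "m \<in> OK" "pp = l * m" by (auto simp: dvdO_def)
  then have "l * 1 = l * (k * m)" using k(2) by (simp add: algebra_simps)
  then have "k * m = 1" using primeO_nz[OF L] by simp
  then show ?thesis using k m by blast
qed

lemma assoc_ordK:
  assumes P: "primeO pp" and L: "primeO l" and d: "dvdO pp l" and x: "x \<in> Kfield" "x \<noteq> 0"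
  shows "ordK pp x = ordK l x"
proof -
  obtain k m where km: "l = pp * k" "k \<in> OK" "m \<in> OK" "k * m = 1" using assoc_units[OF P L d] by blast
  show ?thesis using ordK_eqI[OF P assoc_vrep[OF km vrep_exists[OF L x]]] .
qed

lemma assoc_vclose:
  assumes "primeO pp" "primeO l" "dvdO pp l" "x \<in> Kfield"
  shows "vclose pp x m \<longleftrightarrow> vclose l x m"
  using assoc_ordK[OF assms] by (cases "x = 0") (auto simp: vclose_def)

lemma assoc_loc_solv:
  assumes "primeO pp" "primeO l" "dvdO pp l" "d \<in> Kfield" "loc_solv p q l d"
  shows "loc_solv p q pp d"
proof -
  obtain z w where zw: "\<forall>n. z n \<in> Kfield \<and> w n \<in> Kfield" "vcauchy l z" "vcauchy l w"
    "vnull l (\<lambda>n. Cres p q d (z n) (w n))" using assms(5) by (auto simp: loc_solv_def)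
  have "vcauchy pp z" "vcauchy pp w"
    using zw(1,2,3) assoc_vclose[OF assms(1-3)] unfolding vcauchy_def by (simp_all add: Kf)
  moreover have "vnull pp (\<lambda>n. Cres p q d (z n) (w n))"
    using zw(1,4) assoc_vclose[OF assms(1-3)] Cres_Kfield assms(4) unfolding vnull_def by simp
  ultimately show ?thesis using zw(1) unfolding loc_solv_def by blast
qed

lemma classify:
  assumes P: "primeO pp" and d: "dvdO pp (2 * of_nat p * of_nat q)"
  shows "dvdO pp pi2 \<or> dvdO pp pi2bar \<or> dvdO pp (of_nat p) \<or> dvdO pp (of_nat q)"
proof -
  have "dvdO pp (((pi2 * pi2bar) * of_nat p) * of_nat q)" using d unfolding two_pi2 .
  then show ?thesis using primeO_dvd_mult[OF P] pi2_OK pi2bar_OK by (meson OK_mult OK_of_nat)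
qed


lemma loc_solv_triv_p: "loc_solv p q pp (of_nat p)"
  unfolding loc_solv_def
  by (intro exI[of _ "\<lambda>n. 1"] exI[of _ "\<lambda>n. 0"]) (simp add: vcauchy_def vnull_def Cres_def algebra_simps power2_eq_square)

lemma loc_solv_triv_q: "loc_solv p q pp (of_nat q)"
  unfolding loc_solv_def
  by (intro exI[of _ "\<lambda>n. 1"] exI[of _ "\<lambda>n. 0"]) (simp add: vcauchy_def vnull_def Cres_def algebra_simps power2_eq_square)

lemma loc_solv_from_hensel:
  assumes P: "primeO pp" and zc: "zc \<in> Kfield" and A: "A \<in> Kfield"
    and w: "\<forall>n. w n \<in> Kfield" "vcauchy pp w" "vnull pp (\<lambda>n. (w n)^2 - A)"
    and eq: "\<And>n. Cres p q d zc (w n) = - ((w n)^2 - A)"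
  shows "loc_solv p q pp d"
proof -
  have "vnull pp (\<lambda>n. Cres p q d zc (w n))"
    unfolding vnull_def
  proof
    fix m
    obtain N where N: "\<forall>i\<ge>N. vclose pp ((w i)^2 - A) m" using w(3) by (auto simp: vnull_def)
    have "vclose pp (Cres p q d zc (w i)) m" if "i \<ge> N" for i
      unfolding eq using vclose_uminus[OF P _ N[rule_format, OF that]] w(1) A by (simp add: Kf)
    then show "\<exists>N. \<forall>i\<ge>N. vclose pp (Cres p q d zc (w i)) m" by blast
  qed
  then show ?thesis unfolding loc_solv_def using w(1,2) zc
    by (intro exI[of _ "\<lambda>n. zc"] exI[of _ w]) (auto simp: vcauchy_def)
qed

lemma loc_solv_inert:
  assumes L: "primeO (of_nat l)" "prime l" "2 < l" "l mod 7 \<in> {3,5,6}"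
  shows "loc_solv p q (of_nat l) (-1)"
proof -
  obtain w0 where w0: "w0 \<in> OK" "dvdO (of_nat l) (w0^2 + 1)" using inert_w0[OF L(2-4)] by blast
  have nd: "\<not> dvdO (of_nat l) w0"
  proof
    assume "dvdO (of_nat l) w0"
    then have "dvdO (of_nat l) (w0 * w0)" using dvdO_mult_right w0(1) by blast
    then have "dvdO (of_nat l) ((w0^2 + 1) - w0 * w0)" using dvdO_diff w0(2) by blast
    then show False using primeO_not_dvd_1[OF L(1)] by (simp add: power2_eq_square)
  qed
  have w0nz: "w0 \<noteq> 0" using nd by auto
  have o0: "ordK (of_nat l) w0 = 0" using ordK_unit[OF L(1) w0(1) nd] .
  have n2: "\<not> dvdO (of_nat l) 2"
  proof
    assume "dvdO (of_nat l) 2"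
    then have "dvdO (of_int (int l)) (of_int 2 + of_int 0 * om)" by simp
    then have "int l dvd 2" using dvdO_int_coord by blast
    then show False using L(3) zdvd_imp_le[of "int l" 2] by simp
  qed
  have c: "ordK (of_nat l) 2 \<le> 0" using ordK_unit[OF L(1) OK_numeral n2] by simp
  obtain k where k: "k \<in> OK" "w0^2 + 1 = of_nat l * k" using w0(2) by (auto simp: dvdO_def)
  have E: "vclose (of_nat l) (w0^2 - (-1)) (2 * ordK (of_nat l) w0 + 2 * 0 + 1)"
    using vclose_pow_dvd[OF L(1) k(1), of 1] k(2) o0 by simp
  obtain w where w: "\<forall>n. w n \<in> Kfield" "vcauchy (of_nat l) w" "vnull (of_nat l) (\<lambda>n. (w n)^2 - (-1))"
    using hensel[OF L(1) Kfield_uminus[OF Kfield_1] OK_Kfield[OF w0(1)] w0nz c order.refl E] by blast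
  show ?thesis
    by (rule loc_solv_from_hensel[OF L(1) Kfield_0 _ w, where d = "-1"]) (auto simp: Cres_def Kf)
qed

lemma ordK_pi2_quarter: "ordK pi2 (1/4) = -2"
proof -
  have e: "(1/4::complex) = inverse 4" by simp
  have "ordK pi2 (inverse 4) = - ordK pi2 4" by (rule ordK_inverse[OF primeO_pi2 Kfield_numeral]) simp
  then show ?thesis unfolding e using ordK_pi2_4 by simp
qed

lemma loc_solv_pi2_3:
  assumes "p mod 4 = 3" "q = p + 2"
  shows "loc_solv p q pi2 (-1)"
proof -
  obtain k where pk: "p = 4 * k + 3" using assms(1) by (metis mod_div_mult_eq add.commute mult.commute)
  define A where "A = - (1 + (of_nat p + of_nat q) * (1/2)^2 + of_nat p * of_nat q * (1/2)^4 :: complex)"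
  have AK: "A \<in> Kfield" unfolding A_def by (auto intro!: Kf)
  have w0: "(1/4::complex) \<in> Kfield" "(1/4::complex) \<noteq> 0" by (auto intro!: Kf)
  have e: "(1/4::complex)^2 - A = of_int ((int k + 2)^2)"
    by (simp add: A_def pk assms(2) field_simps power2_eq_square)
  have "vclose pi2 ((1/4::complex)^2 - A) 0" unfolding e using vclose_OK[OF primeO_pi2 OK_of_int] .
  then have E: "vclose pi2 ((1/4::complex)^2 - A) (2 * ordK pi2 (1/4) + 2 * 1 + 1)"
    using vclose_mono[OF primeO_pi2] ordK_pi2_quarter by fastforce
  obtain w where w: "\<forall>n. w n \<in> Kfield" "vcauchy pi2 w" "vnull pi2 (\<lambda>n. (w n)^2 - A)"
    using hensel[OF primeO_pi2 AK w0 _ _ E] ordK_pi2_2 by auto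
  show ?thesis
    by (rule loc_solv_from_hensel[OF primeO_pi2 _ AK w, where zc = "1/2"]) (simp_all add: Cres_def A_def algebra_simps Kf)
qed

lemma loc_solv_pi2_5:
  assumes "p mod 8 = 5" "q = p + 2"
  shows "loc_solv p q pi2 (-1)"
proof -
  obtain k where pk: "p = 8 * k + 5" using assms(1) by (metis mod_div_mult_eq add.commute mult.commute)
  define P where "P = (of_nat p :: complex)"
  define Q where "Q = (of_nat q :: complex)"
  define Z0 where "Z0 = P + 28"
  define Aw where "Aw = - (1 + (P + Q) * Z0 + P * Q * Z0^2)"
  have OKs: "P \<in> OK" "Q \<in> OK" "Z0 \<in> OK" "P + Q \<in> OK" "P * Q \<in> OK"
    by (auto simp: P_def Q_def Z0_def intro: OK_add OK_mult)
  have Z0K: "Z0 \<in> Kfield" "Aw \<in> Kfield" using OKs by (auto simp: Aw_def intro!: Kf simp: OK_Kfield)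
  have ez: "1^2 - Z0 = of_int (2^3 * (- int k - 4))" by (simp add: Z0_def P_def pk)
  have Ez: "vclose pi2 (1^2 - Z0) (2 * ordK pi2 1 + 2 * 1 + 1)"
    unfolding ez using vclose_pi2_int[of 3 "2^3 * (- int k - 4)"] ordK_1[OF primeO_pi2] by simp
  obtain zs where zs: "\<forall>n. zs n \<in> Kfield" "vcauchy pi2 zs" "vnull pi2 (\<lambda>n. (zs n)^2 - Z0)"
      "\<forall>n. zs n \<noteq> 0 \<and> ordK pi2 (zs n) = ordK pi2 1"
    using hensel[OF primeO_pi2 Z0K(1) Kfield_1 _ _ _ Ez] ordK_pi2_2 by auto
  have ew: "4^2 - Aw = of_int (2^7 * (301 + 966 * int k + 959 * int k^2 + 312 * int k^3 + 32 * int k^4))"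
    by (simp add: Aw_def Z0_def P_def Q_def pk assms(2) algebra_simps power2_eq_square power3_eq_cube power4_eq_xxxx)
  have h: "vclose pi2 (of_int (2^7 * (301 + 966 * int k + 959 * int k^2 + 312 * int k^3 + 32 * int k^4))) (int 7)"
    by (rule vclose_pi2_int) simp
  have Ew: "vclose pi2 (4^2 - Aw) (2 * ordK pi2 4 + 2 * 1 + 1)"
    unfolding ew ordK_pi2_4 using h by simp
  obtain ws where ws: "\<forall>n. ws n \<in> Kfield" "vcauchy pi2 ws" "vnull pi2 (\<lambda>n. (ws n)^2 - Aw)"
    using hensel[OF primeO_pi2 Z0K(2) Kfield_numeral _ _ _ Ew] ordK_pi2_2 by auto
  have eq: "Cres p q (-1) (zs n) (ws n) = - ((ws n)^2 - Aw) - ((zs n)^2 - Z0) * ((P + Q) + P * Q * ((zs n)^2 + Z0))" for n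
    by (simp add: Cres_def Aw_def P_def Q_def algebra_simps power2_eq_square power4_eq_xxxx)
  have "vnull pi2 (\<lambda>n. Cres p q (-1) (zs n) (ws n))"
    unfolding vnull_def
  proof
    fix m
    obtain N1 where N1: "\<forall>i\<ge>N1. vclose pi2 ((ws i)^2 - Aw) m" using ws(3) by (auto simp: vnull_def)
    obtain N2 where N2: "\<forall>i\<ge>N2. vclose pi2 ((zs i)^2 - Z0) m" using zs(3) by (auto simp: vnull_def)
    have "vclose pi2 (Cres p q (-1) (zs i) (ws i)) m" if "i \<ge> max N1 N2" for i
    proof -
      have zK: "zs i \<in> Kfield" "ws i \<in> Kfield" using zs ws by auto
      have z0: "vclose pi2 (zs i) 0" using zs(4) ordK_1[OF primeO_pi2] by (simp add: vclose_def)
      have z2: "vclose pi2 ((zs i)^2) 0" using vclose_mult[OF primeO_pi2 zK(1) zK(1) z0 z0] by (simp add: power2_eq_square)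
      have BK: "(zs i)^2 + Z0 \<in> Kfield" "P * Q * ((zs i)^2 + Z0) \<in> Kfield" "P + Q \<in> Kfield"
        using zK OKs Z0K by (auto intro!: Kf simp: OK_Kfield)
      have b1: "vclose pi2 ((zs i)^2 + Z0) 0"
        using vclose_add[OF primeO_pi2 _ Z0K(1) z2 vclose_OK[OF primeO_pi2 OKs(3)]] zK by (simp add: Kf)
      have b2: "vclose pi2 (P * Q * ((zs i)^2 + Z0)) 0"
        using vclose_mult[OF primeO_pi2 _ BK(1) vclose_OK[OF primeO_pi2 OKs(5)] b1] OKs by (simp add: OK_Kfield)
      have B: "vclose pi2 ((P + Q) + P * Q * ((zs i)^2 + Z0)) 0"
        using vclose_add[OF primeO_pi2 BK(3) BK(2) vclose_OK[OF primeO_pi2 OKs(4)] b2] .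
      have t1: "vclose pi2 (- ((ws i)^2 - Aw)) m"
        using vclose_uminus[OF primeO_pi2 _ N1[rule_format]] that zK Z0K by (simp add: Kf)
      have t2: "vclose pi2 (((zs i)^2 - Z0) * ((P + Q) + P * Q * ((zs i)^2 + Z0))) m"
        using vclose_mult[OF primeO_pi2 _ _ N2[rule_format] B] that zK Z0K BK by (simp add: Kf)
      show ?thesis unfolding eq using vclose_diff[OF primeO_pi2 _ _ t1 t2] zK Z0K BK by (simp add: Kf)
    qed
    then show "\<exists>N. \<forall>i\<ge>N. vclose pi2 (Cres p q (-1) (zs i) (ws i)) m" by blast
  qed
  then show ?thesis unfolding loc_solv_def using zs ws by blast
qed


lemma notloc_A:
  assumes "d \<in> Kfield" "d \<noteq> 0" "odd (ordK pi2 d)" "odd p" "odd q"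
  shows "\<not> loc_solv p q pi2 d"
proof
  assume "loc_solv p q pi2 d"
  then obtain z w where zw: "\<forall>n. z n \<in> Kfield \<and> w n \<in> Kfield" "vnull pi2 (\<lambda>n. Cres p q d (z n) (w n))"
    by (auto simp: loc_solv_def)
  have "\<exists>N. \<forall>i\<ge>N. vclose pi2 (Cres p q d (z i) (w i)) (2 * ordK pi2 d + 1)"
    using zw(2) by (simp add: vnull_def)
  then obtain N where "\<forall>i\<ge>N. vclose pi2 (Cres p q d (z i) (w i)) (2 * ordK pi2 d + 1)" by blast
  then have "vclose pi2 (Cres p q d (z N) (w N)) (2 * ordK pi2 d + 1)" by simp
  then show False using core_A[OF assms(1-3) _ _ assms(4,5)] zw(1) by blast
qed

lemma notloc_B:
  assumes "p mod 8 = 1" "q = p + 2"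
  shows "\<not> loc_solv p q pi2 (-1)"
proof
  assume "loc_solv p q pi2 (-1)"
  then obtain z w where zw: "\<forall>n. z n \<in> Kfield \<and> w n \<in> Kfield" "vnull pi2 (\<lambda>n. Cres p q (-1) (z n) (w n))"
    by (auto simp: loc_solv_def)
  have "\<exists>N. \<forall>i\<ge>N. vclose pi2 (Cres p q (-1) (z i) (w i)) 10"
    using zw(2) by (simp add: vnull_def)
  then obtain N where "\<forall>i\<ge>N. vclose pi2 (Cres p q (-1) (z i) (w i)) 10" by blast
  then have "vclose pi2 (Cres p q (-1) (z N) (w N)) 10" by simp
  then show False using core_B[OF assms] zw(1) by blast
qed

lemma pi2bar_dvd_2pq: "dvdO pi2bar (2 * of_nat p * of_nat q)"
  unfolding two_pi2 dvdO_def using pi2_OK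
  by (intro bexI[of _ "pi2 * of_nat p * of_nat q"]) (auto simp: mult.assoc mult.left_commute intro!: OK_mult)

lemma KS2_I:
  assumes "u \<in> OK" "u \<noteq> 0" "\<And>pp. primeO pp \<Longrightarrow> \<not> dvdO pp (2 * of_nat p * of_nat q) \<Longrightarrow> \<not> dvdO pp u"
  shows "u \<in> KS2 p q"
  unfolding KS2_def using assms ordK_unit OK_Kfield by fastforce

lemma p_in_KS2: "p \<noteq> 0 \<Longrightarrow> of_nat p \<in> KS2 p q"
proof (rule KS2_I)
  fix pp assume "primeO pp" "\<not> dvdO pp (2 * of_nat p * of_nat q)"
  moreover have "2 * of_nat p * of_nat q = of_nat p * (2 * of_nat q :: complex)" by simp
  ultimately show "\<not> dvdO pp (of_nat p)" using dvdO_mult_right[of pp "of_nat p" "2 * of_nat q"]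
    by (metis OK_mult OK_numeral OK_of_nat)
qed auto

lemma q_in_KS2: "q \<noteq> 0 \<Longrightarrow> of_nat q \<in> KS2 p q"
proof (rule KS2_I)
  fix pp assume "primeO pp" "\<not> dvdO pp (2 * of_nat p * of_nat q)"
  then show "\<not> dvdO pp (of_nat q)" using dvdO_mult_left[of pp "of_nat q" "2 * of_nat p"]
    by (metis OK_mult OK_numeral OK_of_nat)
qed auto

lemma m1_in_KS2: "-1 \<in> KS2 p q"
proof (rule KS2_I)
  fix pp assume "primeO pp"
  then show "\<not> dvdO pp (-1)" using primeO_not_dvd_1 dvdO_uminus by fastforce
qed (auto intro: OK_uminus)

lemma arch_p: "arch_solv p q (of_nat p)"
  unfolding arch_solv_def by (intro exI[of _ 1] exI[of _ 0]) (simp add: Cres_def algebra_simps power2_eq_square)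
lemma arch_q: "arch_solv p q (of_nat q)"
  unfolding arch_solv_def by (intro exI[of _ 1] exI[of _ 0]) (simp add: Cres_def algebra_simps power2_eq_square)
lemma arch_m1: "arch_solv p q (-1)"
  unfolding arch_solv_def by (intro exI[of _ 0] exI[of _ \<i>]) (simp add: Cres_def)

lemma p_mod7:
  assumes "prime p" "prime q" "odd p" "q = p + 2" "primeO (of_nat p)" "primeO (of_nat q)"
  shows "p mod 7 = 3"
proof -
  have "p \<noteq> 2" using assms(3) by auto
  then have p2: "2 < p" using prime_ge_2_nat[OF assms(1)] by linarith
  have q2: "2 < q" using p2 assms(4) by simp
  have "p mod 7 \<notin> {0,1,2,4}" using not_primeO_split[OF assms(1) p2] assms(5) by metis
  moreover have "q mod 7 \<notin> {0,1,2,4}" using not_primeO_split[OF assms(2) q2] assms(6) by metis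
  moreover have "q mod 7 = (p mod 7 + 2) mod 7" by (simp only: assms(4) mod_add_left_eq)
  moreover have "p mod 7 < 7" by simp
  moreover have "p mod 7 = 0 \<or> p mod 7 = 1 \<or> p mod 7 = 2 \<or> p mod 7 = 3 \<or> p mod 7 = 4 \<or> p mod 7 = 5 \<or> p mod 7 = 6"
    using \<open>p mod 7 < 7\<close> by presburger
  ultimately show ?thesis by auto
qed

theorem proposition2p4:
  fixes p q :: nat
  assumes "prime p" and "prime q" and "odd p" and "odd q" and "q = p + 2"
    and "primeO (of_nat p)" and "primeO (of_nat q)"
  shows "(\<forall>d\<in>KS2 p q. (odd (ordK pi2 d) \<or> odd (ordK pi2bar d)) \<longrightarrow> \<not> selmer p q d)
       \<and> selmer p q (of_nat p) \<and> selmer p q (of_nat q)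
       \<and> (selmer p q (-1) \<longleftrightarrow> p mod 56 \<in> {3, 31, 45})"
proof (intro conjI)
  have pnz: "p \<noteq> 0" "q \<noteq> 0" using assms(1,2) by auto
  have p2: "2 < p" using assms(1,3) prime_ge_2_nat[OF assms(1)] by (cases "p = 2") auto
  have q2: "2 < q" using p2 assms(5) by simp
  have m7: "p mod 7 = 3" using p_mod7[OF assms(1,2,3,5,6,7)] .
  show "\<forall>d\<in>KS2 p q. (odd (ordK pi2 d) \<or> odd (ordK pi2bar d)) \<longrightarrow> \<not> selmer p q d"
  proof (intro ballI impI notI)
    fix d assume d: "d \<in> KS2 p q" "odd (ordK pi2 d) \<or> odd (ordK pi2bar d)" "selmer p q d"
    have dK: "d \<in> Kfield" "d \<noteq> 0" using d(1) by (auto simp: KS2_def)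
    have l1: "loc_solv p q pi2 d" using d(3) primeO_pi2 pi2_dvd_2pq by (auto simp: selmer_def)
    have l2: "loc_solv p q pi2bar d" using d(3) primeO_pi2bar pi2bar_dvd_2pq by (auto simp: selmer_def)
    show False
    proof (cases "odd (ordK pi2 d)")
      case True then show False using notloc_A[OF dK True assms(3,4)] l1 by blast
    next
      case False
      then have o: "odd (ordK pi2bar d)" using d(2) by blast
      have l3: "loc_solv p q pi2 (cnj d)" using loc_solv_cnj[OF l2] by (simp add: pi2bar_cnj)
      have "ordK pi2 (cnj d) = ordK pi2bar d" using ordK_cnj[of pi2bar d] by (simp add: pi2bar_cnj)
      then show False using notloc_A[of "cnj d"] Kfield_cnj[OF dK(1)] dK(2) o assms(3,4) l3 by simp
    qed
  qed
  show "selmer p q (of_nat p)" unfolding selmer_def using p_in_KS2 pnz arch_p loc_solv_triv_p by blast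
  show "selmer p q (of_nat q)" unfolding selmer_def using q_in_KS2 pnz arch_q loc_solv_triv_q by blast
  show "selmer p q (-1) \<longleftrightarrow> p mod 56 \<in> {3, 31, 45}"
  proof
    assume "selmer p q (-1)"
    then have "loc_solv p q pi2 (-1)" using primeO_pi2 pi2_dvd_2pq by (auto simp: selmer_def)
    then have "p mod 8 \<noteq> 1" using notloc_B[OF _ assms(5)] by blast
    have m8: "p mod 56 mod 8 = p mod 8" and m7': "p mod 56 mod 7 = p mod 7"
      by (simp_all add: mod_mod_cancel)
    define r where "r = p mod 56"
    have "r < 56" by (simp add: r_def)
    have "odd r" using assms(3) by (simp add: r_def odd_iff_mod_2_eq_one mod_mod_cancel)
    have "r mod 7 = 3" "r mod 8 \<noteq> 1" using m7' m8 m7 \<open>p mod 8 \<noteq> 1\<close> by (simp_all add: r_def)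
    then have "r = 7 * (r div 7) + 3" by (metis div_mult_mod_eq mult.commute)
    moreover have "r div 7 < 8" using \<open>r < 56\<close> by simp
    moreover have "r div 7 \<in> {0,1,2,3,4,5,6,7} \<longleftrightarrow> r div 7 < 8" by auto
    ultimately have "r \<in> {3, 10, 17, 24, 31, 38, 45, 52}" by force
    then show "p mod 56 \<in> {3, 31, 45}" using \<open>odd r\<close> \<open>r mod 8 \<noteq> 1\<close> by (auto simp: r_def)
  next
    assume "p mod 56 \<in> {3, 31, 45}"
    then have c: "p mod 56 = 3 \<or> p mod 56 = 31 \<or> p mod 56 = 45" by simp
    have m4: "p mod 56 mod 4 = p mod 4" and m8: "p mod 56 mod 8 = p mod 8" by (simp_all add: mod_mod_cancel)
    have lpi2: "loc_solv p q pi2 (-1)"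
    proof (cases "p mod 56 = 45")
      case False
      then have "p mod 4 = 3" using c m4 by auto
      then show ?thesis using loc_solv_pi2_3[OF _ assms(5)] by blast
    next
      case True
      then have "p mod 8 = 5" using m8 by auto
      then show ?thesis using loc_solv_pi2_5[OF _ assms(5)] by blast
    qed
    have lpi2bar: "loc_solv p q pi2bar (-1)" using loc_solv_cnj[OF lpi2] by (simp add: pi2bar_cnj)
    have lp: "loc_solv p q (of_nat p) (-1)" using loc_solv_inert[OF assms(6,1) p2] m7 by simp
    have "q mod 7 = (p mod 7 + 2) mod 7" by (simp only: assms(5) mod_add_left_eq)
    then have "q mod 7 = 5" using m7 by simp
    then have lq: "loc_solv p q (of_nat q) (-1)" using loc_solv_inert[OF assms(7,2) q2] by simp
    have "loc_solv p q pp (-1)" if "primeO pp" "dvdO pp (2 * of_nat p * of_nat q)" for pp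
      using classify[OF that] assoc_loc_solv[OF that(1) primeO_pi2 _ _ lpi2]
        assoc_loc_solv[OF that(1) primeO_pi2bar _ _ lpi2bar]
        assoc_loc_solv[OF that(1) assms(6) _ _ lp] assoc_loc_solv[OF that(1) assms(7) _ _ lq]
      by (auto simp: Kf)
    then show "selmer p q (-1)" unfolding selmer_def using m1_in_KS2 arch_m1 by blast
  qed
qed


end
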